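(* Let $L>0$, $\beta\in(0,1)$, and let $f:[0,L]\to\mathbb R$ be such that $f'\in AC[0,L]$ and $f''\in L^{\frac1{1-\beta}}(\kappa,L)$ for every $\kappa>0$. If $f$ attains a local maximum at $x_0\in(0,L)$ which is a global maximum of $f$ on $[0,x_0]$, then $\big(\frac{\partial}{\partial x}D^\alpha f\big)(x_0)\le0$ for every $\alpha\in(0,\beta)$.
   Context: For $\alpha\in(0,1)$, the Caputo derivative is $D^{\alpha}f(x)=\frac{1}{\Gamma(1-\alpha)}\frac{d}{dx}\int_0^x(x-p)^{-\alpha}[f(p)-f(0)]\,dp$, and $\frac{\partial}{\partial x}D^\alpha f$ is its derivative in $x$. *)

theory Defs
  imports "HOL-Analysis.Analysis"
begin

definition abs_cont_on :: "(real \<Rightarrow> real) \<Rightarrow> real \<Rightarrow> real \<Rightarrow> bool" where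
  "abs_cont_on g a b \<longleftrightarrow>
     (\<forall>\<epsilon>>0. \<exists>\<delta>>0. \<forall>(n::nat) (u::nat \<Rightarrow> real) (v::nat \<Rightarrow> real).
        (\<forall>k<n. a \<le> u k \<and> u k \<le> v k \<and> v k \<le> b) \<and>
        (\<forall>j<n. \<forall>k<n. j \<noteq> k \<longrightarrow> v j \<le> u k \<or> v k \<le> u j) \<and>
        (\<Sum>k<n. v k - u k) < \<delta>
        \<longrightarrow> (\<Sum>k<n. \<bar>g (v k) - g (u k)\<bar>) < \<epsilon>)"

definition in_Lp :: "real \<Rightarrow> (real \<Rightarrow> real) \<Rightarrow> real \<Rightarrow> real \<Rightarrow> bool" where
  "in_Lp q g a b \<longleftrightarrow>
     set_borel_measurable lborel {a..b} g \<and> set_integrable lborel {a..b} (\<lambda>x. \<bar>g x\<bar> powr q)"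

definition caputo :: "real \<Rightarrow> (real \<Rightarrow> real) \<Rightarrow> real \<Rightarrow> real" where
  "caputo \<alpha> f x =
     (1 / Gamma (1 - \<alpha>)) *
       deriv (\<lambda>y. integral {0..y} (\<lambda>p. (y - p) powr (-\<alpha>) * (f p - f 0))) x"

end

theory Submission
  imports Defs
begin


lemma deriv_eps:
  fixes g :: "real \<Rightarrow> real"
  assumes "(g has_real_derivative d) (at x)" "e > 0"
  shows "\<exists>r>0. \<forall>y. \<bar>y - x\<bar> < r \<longrightarrow> \<bar>g y - g x - d * (y - x)\<bar> \<le> e * \<bar>y - x\<bar>"
proof -
  have "((\<lambda>y. (g y - g x) / (y - x)) \<longlongrightarrow> d) (at x)"
    using assms(1) has_field_derivative_iff by blast
  then have "\<forall>\<^sub>F y in at x. dist ((g y - g x) / (y - x)) d < e"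
    using assms(2) by (rule tendstoD)
  then obtain r where r: "r > 0" "\<And>y. y \<noteq> x \<Longrightarrow> dist y x < r \<Longrightarrow> dist ((g y - g x) / (y - x)) d < e"
    unfolding eventually_at by blast
  show ?thesis
  proof (intro exI[of _ r] conjI allI impI)
    fix y assume y: "\<bar>y - x\<bar> < r"
    show "\<bar>g y - g x - d * (y - x)\<bar> \<le> e * \<bar>y - x\<bar>"
    proof (cases "y = x")
      case False
      then have "\<bar>(g y - g x) / (y - x) - d\<bar> < e" using r(2)[of y] y by (simp add: dist_real_def)
      then have "\<bar>((g y - g x) / (y - x) - d) * (y - x)\<bar> \<le> e * \<bar>y - x\<bar>"
        by (simp add: abs_mult mult_right_mono)
      moreover have "((g y - g x) / (y - x) - d) * (y - x) = g y - g x - d * (y - x)"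
        using False by (simp add: field_simps)
      ultimately show ?thesis by simp
    qed simp
  qed (use r in auto)
qed


lemma ac_ftc:
  fixes g h :: "real \<Rightarrow> real"
  assumes ab: "a \<le> b" and ac: "abs_cont_on g a b" and N: "negligible N"
    and d: "\<And>x. x \<in> {a..b} - N \<Longrightarrow> (g has_real_derivative h x) (at x)"
  shows "((\<lambda>x. if x \<in> N then 0 else h x) has_integral (g b - g a)) {a..b}"
  unfolding has_integral_real
proof (intro allI impI)
  fix \<epsilon> :: real assume "\<epsilon> > 0"
  then have "\<epsilon>/2 > 0" by simp
  then obtain \<delta> where "\<delta> > 0" and \<delta>: "\<forall>(n::nat) (u::nat \<Rightarrow> real) (v::nat \<Rightarrow> real).
        (\<forall>k<n. a \<le> u k \<and> u k \<le> v k \<and> v k \<le> b) \<and>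
        (\<forall>j<n. \<forall>k<n. j \<noteq> k \<longrightarrow> v j \<le> u k \<or> v k \<le> u j) \<and>
        (\<Sum>k<n. v k - u k) < \<delta>
        \<longrightarrow> (\<Sum>k<n. \<bar>g (v k) - g (u k)\<bar>) < \<epsilon>/2"
    using ac unfolding abs_cont_on_def by blast
  have Nnull: "N \<in> null_sets lebesgue" using N negligible_iff_null_sets by blast
  then have "N \<in> sets lebesgue" by auto
  obtain U where U: "open U" "N \<subseteq> U" "(U - N) \<in> lmeasurable" "emeasure lebesgue (U - N) < ennreal \<delta>"
    using sets_lebesgue_outer_open[OF \<open>N \<in> sets lebesgue\<close> \<open>\<delta> > 0\<close>] by blast
  have UU: "U = (U - N) \<union> N" using U(2) by blast
  have Ulm: "U \<in> lmeasurable"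
    by (metis UU U(3) Nnull fmeasurableI_null_sets fmeasurable.Un)
  have "measure lebesgue U = measure lebesgue (U - N)"
    by (metis UU U(3) Nnull fmeasurableD measure_Un_null_set)
  also have "\<dots> < \<delta>"
    using U(4) emeasure_eq_measure2[OF U(3)] \<open>\<delta> > 0\<close> by (simp add: ennreal_less_iff)
  finally have mU: "measure lebesgue U < \<delta>" .
  define c where "c = b - a + 1"
  have "c > 0" using ab by (simp add: c_def)
  define e' where "e' = \<epsilon> / (2 * c)"
  have "e' > 0" using \<open>\<epsilon> > 0\<close> \<open>c > 0\<close> by (simp add: e'_def)
  have "\<exists>r>0. (x \<in> N \<longrightarrow> ball x r \<subseteq> U) \<and> (x \<in> {a..b} - N \<longrightarrow>
          (\<forall>y. \<bar>y - x\<bar> < r \<longrightarrow> \<bar>g y - g x - h x * (y - x)\<bar> \<le> e' * \<bar>y - x\<bar>))" for x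
  proof (cases "x \<in> N")
    case True
    then obtain r where "r > 0" "ball x r \<subseteq> U" using U(1,2) open_contains_ball by blast
    then show ?thesis using True by blast
  next
    case False
    show ?thesis
    proof (cases "x \<in> {a..b}")
      case True
      then show ?thesis using deriv_eps[OF d[of x] \<open>e' > 0\<close>] False by auto
    next
      case False2: False
      show ?thesis using False False2 by (intro exI[of _ 1]) auto
    qed
  qed
  then have "\<forall>x. \<exists>r. r > 0 \<and> (x \<in> N \<longrightarrow> ball x r \<subseteq> U) \<and> (x \<in> {a..b} - N \<longrightarrow>
          (\<forall>y. \<bar>y - x\<bar> < r \<longrightarrow> \<bar>g y - g x - h x * (y - x)\<bar> \<le> e' * \<bar>y - x\<bar>))" by blast
  from choice[OF this] obtain r where r0: "\<forall>x. r x > 0 \<and> (x \<in> N \<longrightarrow> ball x (r x) \<subseteq> U) \<and> (x \<in> {a..b} - N \<longrightarrow>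
          (\<forall>y. \<bar>y - x\<bar> < r x \<longrightarrow> \<bar>g y - g x - h x * (y - x)\<bar> \<le> e' * \<bar>y - x\<bar>))" by blast
  have r: "\<And>x. r x > 0" "\<And>x. x \<in> N \<Longrightarrow> ball x (r x) \<subseteq> U"
     "\<And>x y. x \<in> {a..b} - N \<Longrightarrow> \<bar>y - x\<bar> < r x \<Longrightarrow> \<bar>g y - g x - h x * (y - x)\<bar> \<le> e' * \<bar>y - x\<bar>"
    using r0 by blast+
  show "\<exists>\<gamma>. gauge \<gamma> \<and> (\<forall>\<D>. \<D> tagged_division_of {a..b} \<and> \<gamma> fine \<D> \<longrightarrow>
        norm ((\<Sum>(x,k)\<in>\<D>. Henstock_Kurzweil_Integration.content k *\<^sub>R (if x \<in> N then 0 else h x)) - (g b - g a)) < \<epsilon>)"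
  proof (intro exI[of _ "\<lambda>x. ball x (r x)"] conjI allI impI)
    show "gauge (\<lambda>x. ball x (r x))" using r(1) by (simp add: gauge_ball_dependent)
    fix \<D> assume D: "\<D> tagged_division_of {a..b} \<and> (\<lambda>x. ball x (r x)) fine \<D>"
    then have tag: "\<D> tagged_division_of {a..b}" and fine: "(\<lambda>x. ball x (r x)) fine \<D>" by auto
    have fin: "finite \<D>" using tag by blast
    define T where "T = (\<lambda>(x,K). Henstock_Kurzweil_Integration.content K * (if x \<in> N then 0 else h x) - (g (Sup K) - g (Inf K)))"
    have eqT: "(\<Sum>(x,k)\<in>\<D>. Henstock_Kurzweil_Integration.content k *\<^sub>R (if x \<in> N then 0 else h x)) - (g b - g a) = sum T \<D>"
      using additive_tagged_division_1[OF ab tag, of g] unfolding T_def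
      by (simp add: sum_subtractf case_prod_unfold)
    define B :: "(real \<times> real set) set" where "B = {p. fst p \<in> N}"
    have split: "sum T \<D> = sum T (\<D> \<inter> B) + sum T (\<D> - B)" using fin sum.Int_Diff by blast
    have mem: "\<exists>u v. K = {u..v} \<and> u \<le> v \<and> x \<in> K \<and> K \<subseteq> {a..b} \<and> K \<subseteq> ball x (r x)"
      if xK: "(x,K) \<in> \<D>" for x K
    proof -
      obtain u v where K: "K = cbox u v" using tagged_division_ofD(4)[OF tag xK] by blast
      have "x \<in> K" using tagged_division_ofD(2)[OF tag xK] .
      then have "u \<le> v" using K by auto
      moreover have "K \<subseteq> {a..b}" using tagged_division_ofD(3)[OF tag xK] .
      moreover have "K \<subseteq> ball x (r x)" using fine xK by (auto simp: fine_def)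
      ultimately show ?thesis using K \<open>x \<in> K\<close> by auto
    qed
    have T1: "\<bar>T p\<bar> \<le> e' * Henstock_Kurzweil_Integration.content (snd p)" if p: "p \<in> \<D> - B" for p
    proof -
      obtain x K where pxK: "p = (x,K)" by (cases p)
      then have xK: "(x,K) \<in> \<D>" "x \<notin> N" using p B_def by auto
      obtain u v where uv: "K = {u..v}" "u \<le> v" "x \<in> K" "K \<subseteq> {a..b}" "K \<subseteq> ball x (r x)"
        using mem[OF xK(1)] by blast
      have xab: "x \<in> {a..b} - N" using uv xK by auto
      have "u \<in> K" "v \<in> K" using uv by auto
      then have "u \<in> ball x (r x)" "v \<in> ball x (r x)" using uv(5) by auto
      then have du: "\<bar>u - x\<bar> < r x" and dv: "\<bar>v - x\<bar> < r x" by (auto simp: dist_real_def abs_minus_commute)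
      have 1: "\<bar>g v - g x - h x * (v - x)\<bar> \<le> e' * \<bar>v - x\<bar>" using r(3)[OF xab dv] .
      have 2: "\<bar>g u - g x - h x * (u - x)\<bar> \<le> e' * \<bar>u - x\<bar>" using r(3)[OF xab du] .
      have "T p = (v - u) * h x - (g v - g u)" using pxK uv xK by (simp add: T_def)
      also have "\<dots> = (g u - g x - h x * (u - x)) - (g v - g x - h x * (v - x))"
        by (simp add: algebra_simps)
      finally have "\<bar>T p\<bar> \<le> \<bar>g u - g x - h x * (u - x)\<bar> + \<bar>g v - g x - h x * (v - x)\<bar>"
        by (simp add: abs_triangle_ineq4)
      also have "\<dots> \<le> e' * \<bar>u - x\<bar> + e' * \<bar>v - x\<bar>" using 1 2 by simp
      also have "\<dots> = e' * (v - u)" using uv by (simp add: algebra_simps)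
      finally show ?thesis using pxK uv by simp
    qed
    have S1: "\<bar>sum T (\<D> - B)\<bar> \<le> e' * (b - a)"
    proof -
      have "\<bar>sum T (\<D> - B)\<bar> \<le> (\<Sum>p\<in>\<D> - B. \<bar>T p\<bar>)" by (rule sum_abs)
      also have "\<dots> \<le> (\<Sum>p\<in>\<D> - B. e' * Henstock_Kurzweil_Integration.content (snd p))" using T1 by (intro sum_mono)
      also have "\<dots> \<le> (\<Sum>p\<in>\<D>. e' * Henstock_Kurzweil_Integration.content (snd p))" using fin \<open>e' > 0\<close> by (intro sum_mono2) auto
      also have "\<dots> = e' * (b - a)"
        using additive_content_tagged_division[of \<D> a b] tag ab
        by (simp add: sum_distrib_left[symmetric] case_prod_unfold)
      finally show ?thesis .
    qed
    have T2: "T p = - (g (Sup (snd p)) - g (Inf (snd p)))" if "p \<in> \<D> \<inter> B" for p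
      using that by (auto simp: T_def B_def case_prod_unfold)
    define D3 where "D3 = {p \<in> \<D> \<inter> B. Henstock_Kurzweil_Integration.content (snd p) > 0}"
    have finD3: "finite D3" using fin D3_def by auto
    have "\<bar>sum T (\<D> \<inter> B)\<bar> \<le> (\<Sum>p\<in>\<D> \<inter> B. \<bar>T p\<bar>)" by (rule sum_abs)
    also have "\<dots> = (\<Sum>p\<in>\<D> \<inter> B. \<bar>g (Sup (snd p)) - g (Inf (snd p))\<bar>)"
      using T2 by (intro sum.cong) auto
    also have "\<dots> = (\<Sum>p\<in>D3. \<bar>g (Sup (snd p)) - g (Inf (snd p))\<bar>)"
    proof (rule sum.mono_neutral_right)
      show "finite (\<D> \<inter> B)" using fin by auto
      show "D3 \<subseteq> \<D> \<inter> B" by (auto simp: D3_def)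
      show "\<forall>p\<in>\<D> \<inter> B - D3. \<bar>g (Sup (snd p)) - g (Inf (snd p))\<bar> = 0"
      proof
        fix p assume p: "p \<in> \<D> \<inter> B - D3"
        obtain x K where pxK: "p = (x,K)" by (cases p)
        obtain u v where uv: "K = {u..v}" "u \<le> v" using mem[of x K] p pxK by blast
        have "Henstock_Kurzweil_Integration.content K \<le> 0" using p pxK by (auto simp: D3_def)
        then have "u = v" using uv by simp
        then show "\<bar>g (Sup (snd p)) - g (Inf (snd p))\<bar> = 0" using pxK uv by simp
      qed
    qed
    also have "\<dots> < \<epsilon>/2"
    proof -
      obtain e where e: "bij_betw e {0..<card D3} D3" using ex_bij_betw_nat_finite[OF finD3] by blast
      define n where "n = card D3"
      define u where "u = (\<lambda>k. Inf (snd (e k)))"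
      define v where "v = (\<lambda>k. Sup (snd (e k)))"
      have img: "e ` {0..<n} = D3" and inj: "inj_on e {0..<n}" using e n_def by (simp_all add: bij_betw_def)
      have ek: "e k \<in> D3" if "k < n" for k using img that by auto
      have uvk: "snd (e k) = {u k..v k} \<and> u k < v k \<and> snd (e k) \<subseteq> {a..b} \<and> snd (e k) \<subseteq> U"
        if "k < n" for k
      proof -
        obtain x K where ex: "e k = (x,K)" by (cases "e k")
        have inD: "(x,K) \<in> \<D>" and xN: "x \<in> N" and cK: "Henstock_Kurzweil_Integration.content K > 0"
          using ek[OF that] ex by (auto simp: D3_def B_def)
        obtain c d where cd: "K = {c..d}" "c \<le> d" "K \<subseteq> {a..b}" "K \<subseteq> ball x (r x)"
          using mem[OF inD] by blast
        have "c < d" using cK cd by auto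
        then show ?thesis using cd ex r(2)[OF xN] by (auto simp: u_def v_def)
      qed
      have c1: "\<forall>k<n. a \<le> u k \<and> u k \<le> v k \<and> v k \<le> b"
      proof (intro allI impI)
        fix k assume k: "k < n"
        then have "u k \<in> {a..b}" "v k \<in> {a..b}" "u k < v k" using uvk[OF k] by auto
        then show "a \<le> u k \<and> u k \<le> v k \<and> v k \<le> b" by auto
      qed
      have c2: "\<forall>j<n. \<forall>k<n. j \<noteq> k \<longrightarrow> v j \<le> u k \<or> v k \<le> u j"
      proof (intro allI impI)
        fix j k assume jk: "j < n" "k < n" "j \<noteq> k"
        have "e j \<noteq> e k" using inj jk by (simp add: inj_on_eq_iff)
        moreover have "e j \<in> \<D>" "e k \<in> \<D>" using ek[OF jk(1)] ek[OF jk(2)] unfolding D3_def by auto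
        ultimately have "interior (snd (e j)) \<inter> interior (snd (e k)) = {}"
          using tagged_division_ofD(5)[OF tag, of "fst (e j)" "snd (e j)" "fst (e k)" "snd (e k)"] by simp
        then have disj: "{u j<..<v j} \<inter> {u k<..<v k} = {}" using uvk jk by simp
        show "v j \<le> u k \<or> v k \<le> u j"
        proof (rule ccontr)
          assume "\<not> (v j \<le> u k \<or> v k \<le> u j)"
          then have "u k < v j" "u j < v k" by auto
          define m where "m = (max (u j) (u k) + min (v j) (v k)) / 2"
          have "u j < v j" "u k < v k" using uvk jk by auto
          then have "m \<in> {u j<..<v j} \<inter> {u k<..<v k}"
            using \<open>u k < v j\<close> \<open>u j < v k\<close> unfolding m_def
            by (cases "u j \<le> u k"; cases "v j \<le> v k") (simp_all add: max_def min_def)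
          then show False using disj by blast
        qed
      qed
      have "(\<Sum>k<n. v k - u k) = (\<Sum>k\<in>{0..<n}. Henstock_Kurzweil_Integration.content (snd (e k)))"
      proof (rule sum.cong)
        show "{..<n} = {0..<n}" by auto
        fix k assume "k \<in> {0..<n}" then have "k < n" by simp
        from uvk[OF this] show "v k - u k = Henstock_Kurzweil_Integration.content (snd (e k))" by simp
      qed
      also have "\<dots> = (\<Sum>p\<in>D3. Henstock_Kurzweil_Integration.content (snd p))"
        using sum.reindex_bij_betw[OF e, of "\<lambda>p. Henstock_Kurzweil_Integration.content (snd p)"] n_def by simp
      also have "\<dots> \<le> (\<Sum>p\<in>\<D> \<inter> B. Henstock_Kurzweil_Integration.content (snd p))"
        using fin by (intro sum_mono2) (auto simp: D3_def)
      also have "\<dots> = (\<Sum>p\<in>\<D> \<inter> B. measure lebesgue (snd p))"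
      proof (intro sum.cong refl)
        fix p assume "p \<in> \<D> \<inter> B"
        then obtain c d where "snd p = cbox c d" using tagged_division_ofD(4)[OF tag] by (metis IntD1 prod.collapse)
        then show "Henstock_Kurzweil_Integration.content (snd p) = measure lebesgue (snd p)" by simp
      qed
      also have "\<dots> = measure lebesgue (\<Union>(snd ` (\<D> \<inter> B)))"
      proof (rule measure_negligible_finite_Union_image[symmetric])
        show "finite (\<D> \<inter> B)" using fin by auto
        show "snd p \<in> lmeasurable" if "p \<in> \<D> \<inter> B" for p
          using that tagged_division_ofD(4)[OF tag] by (metis IntD1 prod.collapse lmeasurable_cbox)
        show "pairwise (\<lambda>p q. negligible (snd p \<inter> snd q)) (\<D> \<inter> B)"
          unfolding pairwise_def
        proof (intro ballI impI)
          fix p q assume pq: "p \<in> \<D> \<inter> B" "q \<in> \<D> \<inter> B" "p \<noteq> q"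
          obtain c d where cd: "snd p = cbox c d" using pq tagged_division_ofD(4)[OF tag] by (metis IntD1 prod.collapse)
          obtain c' d' where cd': "snd q = cbox c' d'" using pq tagged_division_ofD(4)[OF tag] by (metis IntD1 prod.collapse)
          have "interior (snd p) \<inter> interior (snd q) = {}"
            using pq tagged_division_ofD(5)[OF tag] by (metis IntD1 prod.collapse)
          then have "snd p \<inter> snd q \<subseteq> (cbox c d - box c d) \<union> (cbox c' d' - box c' d')"
            using cd cd' by (auto simp: interior_cbox)
          moreover have "negligible ((cbox c d - box c d) \<union> (cbox c' d' - box c' d'))"
            using negligible_frontier_interval[of c d] negligible_frontier_interval[of c' d'] by (rule negligible_Un)
          ultimately show "negligible (snd p \<inter> snd q)" using negligible_subset by blast
        qed
      qed
      also have "\<dots> \<le> measure lebesgue U"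
      proof (rule measure_mono_fmeasurable)
        show "\<Union>(snd ` (\<D> \<inter> B)) \<subseteq> U"
        proof
          fix z assume "z \<in> \<Union>(snd ` (\<D> \<inter> B))"
          then obtain x K where xK: "(x,K) \<in> \<D>" "x \<in> N" "z \<in> K" by (auto simp: B_def)
          have "K \<subseteq> ball x (r x)" using mem[OF xK(1)] by blast
          then show "z \<in> U" using r(2)[OF xK(2)] xK(3) by blast
        qed
        show "\<Union>(snd ` (\<D> \<inter> B)) \<in> sets lebesgue"
        proof (rule sets.finite_UN)
          show "finite (\<D> \<inter> B)" using fin by auto
          fix p assume "p \<in> \<D> \<inter> B"
          then obtain c d where "snd p = cbox c d" using tagged_division_ofD(4)[OF tag] by (metis IntD1 prod.collapse)
          then show "snd p \<in> sets lebesgue" by simp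
        qed
        show "U \<in> lmeasurable" by (rule Ulm)
      qed
      also have "\<dots> < \<delta>" by (rule mU)
      finally have c3: "(\<Sum>k<n. v k - u k) < \<delta>" .
      have "(\<Sum>k<n. \<bar>g (v k) - g (u k)\<bar>) < \<epsilon>/2" using spec[OF spec[OF spec[OF \<delta>, of n], of u], of v] c1 c2 c3 by blast
      moreover have "(\<Sum>k<n. \<bar>g (v k) - g (u k)\<bar>) = (\<Sum>p\<in>D3. \<bar>g (Sup (snd p)) - g (Inf (snd p))\<bar>)"
        using sum.reindex_bij_betw[OF e, of "\<lambda>p. \<bar>g (Sup (snd p)) - g (Inf (snd p))\<bar>"] n_def
        by (simp add: u_def v_def lessThan_atLeast0)
      ultimately show ?thesis by simp
    qed
    finally have S2: "\<bar>sum T (\<D> \<inter> B)\<bar> < \<epsilon>/2" .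
    have "e' * (b - a) \<le> e' * c" using \<open>e' > 0\<close> by (simp add: c_def)
    also have "\<dots> = \<epsilon>/2" using \<open>c > 0\<close> by (simp add: e'_def)
    finally have "e' * (b - a) \<le> \<epsilon>/2" .
    then have "\<bar>sum T \<D>\<bar> < \<epsilon>" using S1 S2 split by linarith
    then show "norm ((\<Sum>(x,k)\<in>\<D>. Henstock_Kurzweil_Integration.content k *\<^sub>R (if x \<in> N then 0 else h x)) - (g b - g a)) < \<epsilon>"
      using eqT by simp
  qed
qed


lemma ac_cont:
  assumes "abs_cont_on g a b"
  shows "continuous_on {a..b} g"
  unfolding continuous_on_iff
proof (intro ballI allI impI)
  fix x e :: real assume x: "x \<in> {a..b}" and e: "e > 0"
  obtain d where d: "d > 0" and H: "\<forall>(n::nat) (u::nat \<Rightarrow> real) (v::nat \<Rightarrow> real).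
        (\<forall>k<n. a \<le> u k \<and> u k \<le> v k \<and> v k \<le> b) \<and>
        (\<forall>j<n. \<forall>k<n. j \<noteq> k \<longrightarrow> v j \<le> u k \<or> v k \<le> u j) \<and>
        (\<Sum>k<n. v k - u k) < d
        \<longrightarrow> (\<Sum>k<n. \<bar>g (v k) - g (u k)\<bar>) < e"
    using assms e unfolding abs_cont_on_def by blast
  show "\<exists>d>0. \<forall>x'\<in>{a..b}. dist x' x < d \<longrightarrow> dist (g x') (g x) < e"
  proof (intro exI[of _ d] conjI ballI impI)
    fix y assume y: "y \<in> {a..b}" "dist y x < d"
    have "\<bar>g (max x y) - g (min x y)\<bar> < e"
      using spec[OF spec[OF spec[OF H, of 1], of "\<lambda>_. min x y"], of "\<lambda>_. max x y"] x y
      by (auto simp: dist_real_def)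
    then show "dist (g y) (g x) < e"
      by (cases "x \<le> y") (auto simp: dist_real_def max_def min_def abs_minus_commute)
  qed (rule d)
qed

lemma ac_sub:
  assumes "abs_cont_on g a b" "a \<le> c" "d \<le> b"
  shows "abs_cont_on g c d"
  unfolding abs_cont_on_def
proof (intro allI impI)
  fix e :: real assume e: "e > 0"
  obtain r where r: "r > 0" and H: "\<forall>(n::nat) (u::nat \<Rightarrow> real) (v::nat \<Rightarrow> real).
        (\<forall>k<n. a \<le> u k \<and> u k \<le> v k \<and> v k \<le> b) \<and>
        (\<forall>j<n. \<forall>k<n. j \<noteq> k \<longrightarrow> v j \<le> u k \<or> v k \<le> u j) \<and>
        (\<Sum>k<n. v k - u k) < r
        \<longrightarrow> (\<Sum>k<n. \<bar>g (v k) - g (u k)\<bar>) < e"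
    using assms e unfolding abs_cont_on_def by blast
  show "\<exists>\<delta>>0. \<forall>(n::nat) (u::nat \<Rightarrow> real) (v::nat \<Rightarrow> real).
        (\<forall>k<n. c \<le> u k \<and> u k \<le> v k \<and> v k \<le> d) \<and>
        (\<forall>j<n. \<forall>k<n. j \<noteq> k \<longrightarrow> v j \<le> u k \<or> v k \<le> u j) \<and>
        (\<Sum>k<n. v k - u k) < \<delta>
        \<longrightarrow> (\<Sum>k<n. \<bar>g (v k) - g (u k)\<bar>) < e"
  proof (intro exI[of _ r] conjI allI impI)
    fix n :: nat and u v :: "nat \<Rightarrow> real"
    assume A: "(\<forall>k<n. c \<le> u k \<and> u k \<le> v k \<and> v k \<le> d) \<and>
        (\<forall>j<n. \<forall>k<n. j \<noteq> k \<longrightarrow> v j \<le> u k \<or> v k \<le> u j) \<and> (\<Sum>k<n. v k - u k) < r"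
    then have "(\<forall>k<n. a \<le> u k \<and> u k \<le> v k \<and> v k \<le> b)" using assms(2,3) by force
    then show "(\<Sum>k<n. \<bar>g (v k) - g (u k)\<bar>) < e"
      using spec[OF spec[OF spec[OF H, of n], of u], of v] A by blast
  qed (rule r)
qed

lemma young_el:
  fixes t c q :: real
  assumes "0 \<le> t" "0 < c" "1 \<le> q"
  shows "t \<le> c + c powr (1 - q) * t powr q"
proof (cases "t \<le> c")
  case True
  then show ?thesis using assms by (simp add: add_increasing2)
next
  case False
  then have tpos: "t > 0" and tc: "t / c \<ge> 1" using assms by auto
  have "c powr (1 - q) * t powr q = t * (t powr (q - 1) / c powr (q - 1))"
    using tpos assms(2) by (simp add: powr_diff powr_add[symmetric] field_simps)
  also have "\<dots> = t * (t / c) powr (q - 1)"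
    using tpos assms(2) by (simp add: powr_divide)
  also have "\<dots> \<ge> t * 1"
    using tpos tc assms(3) by (intro mult_left_mono ge_one_powr_ge_zero) auto
  finally show ?thesis using assms by simp
qed

lemma lip_fin:
  fixes w w' :: "real \<Rightarrow> real"
  assumes ab: "a \<le> b" and E: "finite E" and K: "0 \<le> K" and c: "continuous_on {a..b} w"
    and d: "\<And>t. t \<in> {a<..<b} - E \<Longrightarrow> (w has_real_derivative w' t) (at t)"
    and bd: "\<And>t. t \<in> {a<..<b} - E \<Longrightarrow> \<bar>w' t\<bar> \<le> K"
  shows "\<bar>w b - w a\<bar> \<le> K * (b - a)"
proof -
  have "(w' has_integral (w b - w a)) {a..b}"
    using d by (intro fundamental_theorem_of_calculus_interior_strong[OF E ab _ c])
       (simp add: has_real_derivative_iff_has_vector_derivative)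
  then have "norm (w b - w a) \<le> K * Henstock_Kurzweil_Integration.content {a..b}"
    using E by (intro has_integral_bound_real[OF K, of "E \<union> {a,b}"]) (auto intro!: bd)
  then show ?thesis using ab by simp
qed


lemma holder_aux:
  fixes \<phi> w :: "real \<Rightarrow> real"
  assumes \<beta>: "0 < \<beta>" "\<beta> < 1"
    and ac: "abs_cont_on \<phi> \<kappa> L" and N: "negligible N"
    and d: "\<And>x. x \<in> {\<kappa>..L} - N \<Longrightarrow> (\<phi> has_real_derivative w x) (at x)"
    and Lq: "(\<lambda>x. \<bar>w x\<bar> powr (1/(1-\<beta>))) integrable_on {\<kappa>..L}"
    and ab: "\<kappa> \<le> a" "a < b" "b \<le> L"
  shows "\<bar>\<phi> b - \<phi> a\<bar> \<le> (1 + integral {\<kappa>..L} (\<lambda>x. \<bar>w x\<bar> powr (1/(1-\<beta>)))) * \<bar>b - a\<bar> powr \<beta>"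
proof -
  define q where "q = 1/(1-\<beta>)"
  have q1: "1 \<le> q" using \<beta> by (simp add: q_def)
  define M where "M = integral {\<kappa>..L} (\<lambda>x. \<bar>w x\<bar> powr q)"
  define l where "l = b - a"
  have l: "l > 0" using ab by (simp add: l_def)
  define w' where "w' = (\<lambda>x. if x \<in> N then 0 else w x)"
  have F: "(w' has_integral (\<phi> b - \<phi> a)) {a..b}"
    unfolding w'_def
  proof (rule ac_ftc[OF _ ac_sub[OF ac] N])
    show "a \<le> b" "\<kappa> \<le> a" "b \<le> L" using ab by auto
    fix x assume "x \<in> {a..b} - N"
    then have "x \<in> {\<kappa>..L} - N" using ab by auto
    then show "(\<phi> has_real_derivative w x) (at x)" by (rule d)
  qed
  have Lq': "(\<lambda>x. \<bar>w x\<bar> powr q) integrable_on {a..b}"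
  proof (rule integrable_on_subinterval)
    show "(\<lambda>x. \<bar>w x\<bar> powr q) integrable_on {\<kappa>..L}" using Lq by (simp add: q_def)
    show "{a..b} \<subseteq> {\<kappa>..L}" using ab by auto
  qed
  have ex: "(\<beta> - 1) * (1 - q) = \<beta>" using \<beta> by (simp add: q_def field_simps)
  have bd: "\<bar>w' x\<bar> \<le> l powr (\<beta> - 1) + l powr \<beta> * \<bar>w x\<bar> powr q" for x
  proof (cases "x \<in> N")
    case True
    then show ?thesis using l by (simp add: w'_def add_nonneg_nonneg)
  next
    case False
    have "\<bar>w x\<bar> \<le> l powr (\<beta> - 1) + (l powr (\<beta> - 1)) powr (1 - q) * \<bar>w x\<bar> powr q"
      using l q1 by (intro young_el) auto
    also have "(l powr (\<beta> - 1)) powr (1 - q) = l powr \<beta>"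
      using ex by (simp add: powr_powr)
    finally show ?thesis using False by (simp add: w'_def)
  qed
  have int_bd: "((\<lambda>x. l powr (\<beta> - 1) + l powr \<beta> * \<bar>w x\<bar> powr q) has_integral
      (l powr (\<beta> - 1) * l + l powr \<beta> * integral {a..b} (\<lambda>x. \<bar>w x\<bar> powr q))) {a..b}"
  proof (rule has_integral_add)
    show "((\<lambda>x. l powr (\<beta> - 1)) has_integral l powr (\<beta> - 1) * l) {a..b}"
      using has_integral_const_real[of "l powr (\<beta> - 1)" a b] ab by (simp add: l_def mult.commute)
    show "((\<lambda>x. l powr \<beta> * \<bar>w x\<bar> powr q) has_integral l powr \<beta> * integral {a..b} (\<lambda>x. \<bar>w x\<bar> powr q)) {a..b}"
      using Lq' by (intro has_integral_mult_right) (simp add: integrable_integral)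
  qed
  have "\<bar>\<phi> b - \<phi> a\<bar> = norm (integral {a..b} w')" using F by (simp add: integral_unique)
  also have "\<dots> \<le> integral {a..b} (\<lambda>x. l powr (\<beta> - 1) + l powr \<beta> * \<bar>w x\<bar> powr q)"
    using F int_bd bd by (intro integral_norm_bound_integral) (auto simp: has_integral_integrable)
  also have "\<dots> = l powr (\<beta> - 1) * l + l powr \<beta> * integral {a..b} (\<lambda>x. \<bar>w x\<bar> powr q)"
    using int_bd by (simp add: integral_unique)
  also have "l powr (\<beta> - 1) * l = l powr \<beta>"
    using powr_mult_base[of l "\<beta> - 1"] l by (simp add: mult.commute)
  also have "integral {a..b} (\<lambda>x. \<bar>w x\<bar> powr q) \<le> M"
    unfolding M_def using Lq Lq' ab by (intro integral_subset_le) (auto simp: q_def)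
  then have "l powr \<beta> + l powr \<beta> * integral {a..b} (\<lambda>x. \<bar>w x\<bar> powr q) \<le> l powr \<beta> + l powr \<beta> * M"
    by (simp add: mult_left_mono)
  also have "\<dots> = (1 + M) * \<bar>b - a\<bar> powr \<beta>" using l by (simp add: l_def algebra_simps)
  finally show ?thesis by (simp add: M_def q_def)
qed

lemma holder:
  fixes \<phi> w :: "real \<Rightarrow> real"
  assumes \<beta>: "0 < \<beta>" "\<beta> < 1"
    and ac: "abs_cont_on \<phi> \<kappa> L" and N: "negligible N"
    and d: "\<And>x. x \<in> {\<kappa>..L} - N \<Longrightarrow> (\<phi> has_real_derivative w x) (at x)"
    and Lq: "(\<lambda>x. \<bar>w x\<bar> powr (1/(1-\<beta>))) integrable_on {\<kappa>..L}"
  shows "\<exists>C\<ge>0. \<forall>a\<in>{\<kappa>..L}. \<forall>b\<in>{\<kappa>..L}. \<bar>\<phi> a - \<phi> b\<bar> \<le> C * \<bar>a - b\<bar> powr \<beta>"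
proof -
  define C where "C = 1 + integral {\<kappa>..L} (\<lambda>x. \<bar>w x\<bar> powr (1/(1-\<beta>)))"
  have "integral {\<kappa>..L} (\<lambda>x. \<bar>w x\<bar> powr (1/(1-\<beta>))) \<ge> 0"
    using Lq by (intro integral_nonneg) auto
  then have C0: "C \<ge> 0" by (simp add: C_def)
  have "\<bar>\<phi> a - \<phi> b\<bar> \<le> C * \<bar>a - b\<bar> powr \<beta>" if ab: "a \<in> {\<kappa>..L}" "b \<in> {\<kappa>..L}" for a b
  proof (cases a b rule: linorder_cases)
    case less
    then show ?thesis using holder_aux[OF \<beta> ac N d Lq, of a b] ab
      by (auto simp: C_def abs_minus_commute)
  next
    case equal
    then show ?thesis using C0 by simp
  next
    case greater
    then show ?thesis using holder_aux[OF \<beta> ac N d Lq, of b a] ab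
      by (auto simp: C_def abs_minus_commute)
  qed
  then show ?thesis using C0 by blast
qed


lemma integral_minus_finite:
  fixes f :: "real \<Rightarrow> real"
  assumes "finite E"
  shows "integral (S - E) f = integral S f"
proof (rule integral_spike_set)
  have "{x \<in> S - E - S. f x \<noteq> 0} = {}" by auto
  then show "negligible {x \<in> S - E - S. f x \<noteq> 0}" by (simp only: negligible_empty)
  have "{x \<in> S - (S - E). f x \<noteq> 0} \<subseteq> E" by auto
  then show "negligible {x \<in> S - (S - E). f x \<noteq> 0}"
    using assms negligible_finite negligible_subset by blast
qed

lemma integrable_minus_finite:
  fixes f :: "real \<Rightarrow> real"
  assumes "finite E" "f integrable_on S"
  shows "f integrable_on (S - E)"
proof (rule integrable_spike_set[OF assms(2)])
  show "negligible {x \<in> S - (S - E). f x \<noteq> 0}"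
    using assms negligible_finite negligible_subset[of E] by (metis (no_types, lifting) Diff_Diff_Int Int_iff mem_Collect_eq subsetI)
  have "{x \<in> S - E - S. f x \<noteq> 0} = {}" by auto
  then show "negligible {x \<in> S - E - S. f x \<noteq> 0}" by (simp only: negligible_empty)
qed

lemma DDC:
  fixes P :: "real \<Rightarrow> real \<Rightarrow> real" and Q H :: "real \<Rightarrow> real"
  assumes r: "r > 0"
    and int: "\<And>y. \<bar>y - yc\<bar> < r \<Longrightarrow> P y integrable_on {a..b}"
    and H: "H integrable_on {a..b}"
    and bd: "\<And>h s. 0 < \<bar>h\<bar> \<Longrightarrow> \<bar>h\<bar> < r \<Longrightarrow> s \<in> {a..b} \<Longrightarrow> \<bar>(P (yc + h) s - P yc s) / h\<bar> \<le> H s"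
    and E: "finite E"
    and der: "\<And>s. s \<in> {a..b} - E \<Longrightarrow> ((\<lambda>y. P y s) has_real_derivative Q s) (at yc)"
  shows "((\<lambda>y. integral {a..b} (P y)) has_real_derivative integral {a..b} Q) (at yc)"
    and "Q integrable_on {a..b}"
proof -
  show "Q integrable_on {a..b}"
  proof -
    define S where "S = {a..b} - E"
    define F where "F = (\<lambda>k s. (P (yc + (r / 2 * inverse (real (Suc k)))) s - P yc s) / ((r / 2 * inverse (real (Suc k)))))"
    have ycr: "\<bar>yc - yc\<bar> < r" using r by simp
    have hk: "0 < (r / 2 * inverse (real (Suc k)))" "(r / 2 * inverse (real (Suc k))) < r" for k :: nat
    proof -
      have "inverse (real (Suc k)) \<le> 1" "inverse (real (Suc k)) > 0" by (auto simp: field_simps)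
      then show "0 < (r / 2 * inverse (real (Suc k)))" "(r / 2 * inverse (real (Suc k))) < r"
        using r by (auto intro: mult_pos_pos)
    qed
    have "Q integrable_on S"
    proof (rule dominated_convergence(1))
      show "F k integrable_on S" for k
      proof -
        have "\<bar>(yc + (r / 2 * inverse (real (Suc k)))) - yc\<bar> < r" using hk[of k] by simp
        then have "(\<lambda>s. (P (yc + (r / 2 * inverse (real (Suc k)))) s - P yc s) * inverse ((r / 2 * inverse (real (Suc k))))) integrable_on {a..b}"
          using int ycr by (intro integrable_on_mult_left integrable_diff) auto
        then show ?thesis unfolding S_def F_def divide_inverse by (rule integrable_minus_finite[OF E])
      qed
      show "H integrable_on S" unfolding S_def by (rule integrable_minus_finite[OF E H])
      show "norm (F k s) \<le> H s" if "s \<in> S" for k s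
      proof -
        have h1: "0 < \<bar>r / 2 * inverse (real (Suc k))\<bar>" "\<bar>r / 2 * inverse (real (Suc k))\<bar> < r" using hk[of k] by auto
        have s1: "s \<in> {a..b}" using that S_def by auto
        have "\<bar>(P (yc + (r / 2 * inverse (real (Suc k)))) s - P yc s) / (r / 2 * inverse (real (Suc k)))\<bar> \<le> H s"
          by (rule bd[OF h1 s1])
        then show ?thesis by (simp only: F_def real_norm_def)
      qed
      show "(\<lambda>k. F k s) \<longlonglongrightarrow> Q s" if s: "s \<in> S" for s
      proof -
        have lim: "((\<lambda>y. (P y s - P yc s) / (y - yc)) \<longlongrightarrow> Q s) (at yc)"
          using der[of s] s unfolding S_def has_field_derivative_iff by simp
        have seqlim: "(\<lambda>k. yc + (r / 2 * inverse (real (Suc k)))) \<longlonglongrightarrow> yc"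
        proof -
          have "(\<lambda>k. r / 2 * inverse (real (Suc k))) \<longlonglongrightarrow> 0"
            by (intro tendsto_mult_right_zero LIMSEQ_inverse_real_of_nat)
          then show ?thesis using tendsto_add[OF tendsto_const[of yc], of "\<lambda>k. r / 2 * inverse (real (Suc k))" 0]
            by simp
        qed
        have seqne: "\<forall>k. yc + (r / 2 * inverse (real (Suc k))) \<in> UNIV - {yc}" using hk by (auto simp: less_le)
        have "((\<lambda>y. (P y s - P yc s) / (y - yc)) \<circ> (\<lambda>k. yc + (r / 2 * inverse (real (Suc k))))) \<longlonglongrightarrow> Q s"
          using lim[unfolded tendsto_at_iff_sequentially, rule_format, OF seqne[rule_format] seqlim] .
        then show ?thesis by (simp add: F_def o_def)
      qed
    qed
    then show ?thesis
    proof (rule integrable_spike_set)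
      have "{x \<in> S - {a..b}. Q x \<noteq> 0} = {}" by (auto simp: S_def)
      then show "negligible {x \<in> S - {a..b}. Q x \<noteq> 0}" by (simp only: negligible_empty)
      have "{x \<in> {a..b} - S. Q x \<noteq> 0} \<subseteq> E" by (auto simp: S_def)
      then show "negligible {x \<in> {a..b} - S. Q x \<noteq> 0}"
        using E negligible_finite negligible_subset by blast
    qed
  qed
  show "((\<lambda>y. integral {a..b} (P y)) has_real_derivative integral {a..b} Q) (at yc)"
  unfolding has_field_derivative_iff tendsto_at_iff_sequentially
proof (intro allI impI)
  fix X :: "nat \<Rightarrow> real" assume X: "\<forall>i. X i \<in> UNIV - {yc}" "X \<longlonglongrightarrow> yc"
  then have "\<forall>\<^sub>F i in sequentially. dist (X i) yc < r" using r by (simp add: tendstoD)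
  then obtain N0 where N0: "\<And>i. i \<ge> N0 \<Longrightarrow> \<bar>X i - yc\<bar> < r"
    by (auto simp: eventually_sequentially dist_real_def)
  define Y where "Y = (\<lambda>k. X (k + N0))"
  have Yr: "\<bar>Y k - yc\<bar> < r" for k using N0 by (simp add: Y_def)
  have Yne: "Y k \<noteq> yc" for k using X(1) by (simp add: Y_def)
  have Ylim: "Y \<longlonglongrightarrow> yc" using X(2) unfolding Y_def by (rule LIMSEQ_ignore_initial_segment)
  define S where "S = {a..b} - E"
  define F where "F = (\<lambda>k s. (P (Y k) s - P yc s) / (Y k - yc))"
  have ycr: "\<bar>yc - yc\<bar> < r" using r by simp
  have Fint: "F k integrable_on {a..b}" for k
  proof -
    have "(\<lambda>s. (P (Y k) s - P yc s) * inverse (Y k - yc)) integrable_on {a..b}"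
      using int[OF Yr] int[OF ycr] by (intro integrable_on_mult_left integrable_diff)
    then show ?thesis by (simp add: F_def divide_inverse)
  qed
  have eqk: "(integral {a..b} (P (Y k)) - integral {a..b} (P yc)) / (Y k - yc) = integral S (F k)" for k
  proof -
    have "integral S (F k) = integral {a..b} (F k)" unfolding S_def by (rule integral_minus_finite[OF E])
    also have "\<dots> = (integral {a..b} (P (Y k)) - integral {a..b} (P yc)) / (Y k - yc)"
      unfolding F_def using int[OF Yr] int[OF ycr]
      by (simp add: integral_diff integral_divide)
    finally show ?thesis by simp
  qed
  have DC: "(\<lambda>k. integral S (F k)) \<longlonglongrightarrow> integral S Q"
  proof (rule dominated_convergence(2))
    show "F k integrable_on S" for k unfolding S_def by (rule integrable_minus_finite[OF E Fint])
    show "H integrable_on S" unfolding S_def by (rule integrable_minus_finite[OF E H])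
    show "norm (F k s) \<le> H s" if "s \<in> S" for k s
    proof -
      have "0 < \<bar>Y k - yc\<bar>" using Yne[of k] by simp
      then show ?thesis using bd[of "Y k - yc" s] Yr[of k] that by (simp add: F_def S_def)
    qed
    show "(\<lambda>k. F k s) \<longlonglongrightarrow> Q s" if s: "s \<in> S" for s
    proof -
      have "((\<lambda>y. (P y s - P yc s) / (y - yc)) \<longlongrightarrow> Q s) (at yc)"
        using der[of s] s unfolding S_def has_field_derivative_iff by simp
      then have "((\<lambda>y. (P y s - P yc s) / (y - yc)) \<circ> Y) \<longlonglongrightarrow> Q s"
        unfolding tendsto_at_iff_sequentially using Yne Ylim by auto
      then show ?thesis by (simp add: F_def o_def)
    qed
  qed
  have "integral S Q = integral {a..b} Q" unfolding S_def by (rule integral_minus_finite[OF E])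
  then have "(\<lambda>k. (integral {a..b} (P (Y k)) - integral {a..b} (P yc)) / (Y k - yc)) \<longlonglongrightarrow> integral {a..b} Q"
    using DC eqk by simp
  then show "((\<lambda>y. (integral {a..b} (P y) - integral {a..b} (P yc)) / (y - yc)) \<circ> X) \<longlonglongrightarrow> integral {a..b} Q"
    unfolding Y_def o_def by (rule LIMSEQ_offset)
qed
qed


definition gt :: "(real \<Rightarrow> real) \<Rightarrow> real \<Rightarrow> real" where
  "gt f t = f (max t 0) - f 0"

definition ph :: "(real \<Rightarrow> real) \<Rightarrow> real \<Rightarrow> real" where
  "ph \<phi> t = (if t \<le> 0 then 0 else \<phi> t)"

lemma gt_neg: "t \<le> 0 \<Longrightarrow> gt f t = 0"
  by (simp add: gt_def max_def)

lemma gt_pos: "0 \<le> t \<Longrightarrow> gt f t = f t - f 0"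
  by (simp add: gt_def max_def)

lemma gt_deriv:
  assumes d: "\<And>t. t \<in> {0<..<L} \<Longrightarrow> (f has_real_derivative \<phi> t) (at t)"
    and t: "t < L" "t \<noteq> 0"
  shows "(gt f has_real_derivative ph \<phi> t) (at t)"
proof (cases "t > 0")
  case True
  have "((\<lambda>x. f x - f 0) has_real_derivative \<phi> t) (at t)"
    using d[of t] True t by (auto intro: derivative_eq_intros)
  then have "(gt f has_real_derivative \<phi> t) (at t)"
    by (rule has_field_derivative_transform_within_open[of _ _ _ "{0<..<L}"])
       (use True t in \<open>auto simp: gt_pos\<close>)
  then show ?thesis using True by (simp add: ph_def)
next
  case False
  then have "t < 0" using t by simp
  have "((\<lambda>x. 0) has_real_derivative 0) (at t)" by simp
  then have "(gt f has_real_derivative 0) (at t)"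
    by (rule has_field_derivative_transform_within_open[of _ _ _ "{..<0}"])
       (use \<open>t < 0\<close> in \<open>auto simp: gt_neg\<close>)
  then show ?thesis using False by (simp add: ph_def)
qed

lemma gt_cont:
  assumes "continuous_on {0..L} f" "0 \<le> L"
  shows "continuous_on {..L} (gt f)"
proof -
  have "continuous_on {..L} (\<lambda>t. max t 0)" by (intro continuous_intros)
  moreover have "(\<lambda>t. max t 0) ` {..L} \<subseteq> {0..L}" using assms(2) by auto
  ultimately have "continuous_on {..L} (\<lambda>t. f (max t 0))"
    using continuous_on_compose2[OF assms(1)] by blast
  then show ?thesis unfolding gt_def by (intro continuous_intros)
qed

lemma gt_lip:
  assumes c: "continuous_on {0..L} f" and L: "0 \<le> L"
    and d: "\<And>t. t \<in> {0<..<L} \<Longrightarrow> (f has_real_derivative \<phi> t) (at t)"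
    and B: "\<And>t. t \<in> {0<..<L} \<Longrightarrow> \<bar>\<phi> t\<bar> \<le> B" "0 \<le> B"
    and xy: "x \<le> L" "y \<le> L"
  shows "\<bar>gt f x - gt f y\<bar> \<le> B * \<bar>x - y\<bar>"
proof -
  have main: "\<bar>gt f b - gt f a\<bar> \<le> B * (b - a)" if ab: "a \<le> b" "b \<le> L" for a b
  proof (rule lip_fin[OF ab(1) _ B(2), of "{0}"])
    show "finite {0::real}" by simp
    have "{a..b} \<subseteq> {..L}" using ab by auto
    then show "continuous_on {a..b} (gt f)"
      using gt_cont[OF c L] continuous_on_subset by blast
    show "(gt f has_real_derivative ph \<phi> t) (at t)" if t: "t \<in> {a<..<b} - {0}" for t
    proof (rule gt_deriv[OF d])
      show "t < L" "t \<noteq> 0" using t ab by auto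
    qed
    show "\<bar>ph \<phi> t\<bar> \<le> B" if t: "t \<in> {a<..<b} - {0}" for t
    proof (cases "t \<le> 0")
      case True then show ?thesis using B(2) by (simp add: ph_def)
    next
      case False then show ?thesis using t ab B(1)[of t] by (simp add: ph_def)
    qed
  qed
  show ?thesis
  proof (cases "x \<le> y")
    case True
    then show ?thesis using main[of x y] xy by (simp add: abs_minus_commute)
  next
    case False
    then show ?thesis using main[of y x] xy by simp
  qed
qed

lemma integrable_0L:
  fixes w H :: "real \<Rightarrow> real"
  assumes c: "continuous_on {0<..L} w" and H: "H integrable_on {0..L}"
    and bd: "\<And>s. s \<in> {0<..L} \<Longrightarrow> \<bar>w s\<bar> \<le> H s"
  shows "w integrable_on {0..L}"
proof -
  have e: "{0..L} - {0} = {0<..L}" by auto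
  have "H integrable_on ({0..L} - {0})" by (rule integrable_minus_finite[OF _ H]) simp
  then have Hi: "H integrable_on {0<..L}" by (simp only: e)
  have "{0<..L} \<in> sets lebesgue" by simp
  then have wm: "w \<in> borel_measurable (lebesgue_on {0<..L})"
    by (rule continuous_imp_measurable_on_sets_lebesgue[OF c])
  have "w integrable_on {0<..L}"
    by (rule measurable_bounded_by_integrable_imp_integrable[OF wm Hi]) (use bd in auto)
  then show ?thesis
  proof (rule integrable_spike_set)
    have "{x \<in> {0<..L} - {0..L}. w x \<noteq> 0} = {}" by auto
    then show "negligible {x \<in> {0<..L} - {0..L}. w x \<noteq> 0}" by (simp only: negligible_empty)
    have "{x \<in> {0..L} - {0<..L}. w x \<noteq> 0} \<subseteq> {0}" by auto
    then show "negligible {x \<in> {0..L} - {0<..L}. w x \<noteq> 0}"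
      using negligible_subset by blast
  qed
qed

lemma powr_int:
  fixes \<gamma> L c :: real
  assumes "\<gamma> > -1" "0 \<le> L"
  shows "(\<lambda>s. c * s powr \<gamma>) integrable_on {0..L}"
  using integrable_on_powr_from_0[OF assms] by (rule integrable_on_mult_right)

lemma LIM0:
  fixes w :: "real \<Rightarrow> real"
  assumes w: "w integrable_on {0..L}" and L: "0 < L" and g: "\<gamma> > -1" and c: "0 \<le> c"
    and bd: "\<And>s. s \<in> {0..L} \<Longrightarrow> \<bar>w s\<bar> \<le> c * s powr \<gamma>"
  shows "((\<lambda>e. integral {e..L} w) \<longlongrightarrow> integral {0..L} w) (at_right 0)"
proof -
  have ev: "\<forall>\<^sub>F e in at_right 0. 0 < e \<and> e < L"
    using L eventually_at_right_less[of 0] by (auto simp: eventually_at_right)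
  have eq: "\<forall>\<^sub>F e in at_right 0. integral {0..L} w - integral {0..e} w = integral {e..L} w"
    using ev
  proof (rule eventually_mono)
    fix e assume e: "0 < e \<and> e < L"
    have "integral {0..e} w + integral {e..L} w = integral {0..L} w"
      using w e by (intro Henstock_Kurzweil_Integration.integral_combine) auto
    then show "integral {0..L} w - integral {0..e} w = integral {e..L} w" by simp
  qed
  have lim0: "((\<lambda>e. c * e powr (\<gamma> + 1) / (\<gamma> + 1)) \<longlongrightarrow> 0) (at_right 0)"
  proof -
    have l1: "((\<lambda>e. e powr (\<gamma> + 1)) \<longlongrightarrow> 0) (at_right 0)"
    proof (rule tendsto_zero_powrI)
      show "((\<lambda>e. e) \<longlongrightarrow> 0) (at_right 0)" by (rule tendsto_ident_at)
      show "((\<lambda>e. \<gamma> + 1) \<longlongrightarrow> \<gamma> + 1) (at_right 0)" by (rule tendsto_const)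
      show "\<forall>\<^sub>F e in at_right (0::real). 0 \<le> e"
        using eventually_at_right_less[of "0::real"] by (rule eventually_mono) simp
      show "0 < \<gamma> + 1" using g by simp
    qed
    have "((\<lambda>e. c * e powr (\<gamma> + 1) / (\<gamma> + 1)) \<longlongrightarrow> c * 0 / (\<gamma> + 1)) (at_right 0)"
      by (intro tendsto_divide tendsto_mult tendsto_const l1) (use g in auto)
    then show ?thesis by simp
  qed
  have small: "((\<lambda>e. integral {0..e} w) \<longlongrightarrow> 0) (at_right 0)"
  proof (rule tendsto_0_le[OF lim0, of _ 1])
    show "\<forall>\<^sub>F e in at_right 0. norm (integral {0..e} w) \<le> norm (c * e powr (\<gamma> + 1) / (\<gamma> + 1)) * 1"
      using ev
    proof (rule eventually_mono)
      fix e assume e: "0 < e \<and> e < L"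
      have wi: "w integrable_on {0..e}" using w e by (intro integrable_on_subinterval[OF w]) auto
      have "norm (integral {0..e} w) \<le> integral {0..e} (\<lambda>s. c * s powr \<gamma>)"
        using wi powr_int[OF g, of e c] e bd by (intro integral_norm_bound_integral) auto
      also have "\<dots> = c * (e powr (\<gamma> + 1) / (\<gamma> + 1))"
        using has_integral_powr_from_0[OF g, of e] e
        by (simp add: integral_mult_right integral_unique)
      also have "\<dots> = c * e powr (\<gamma> + 1) / (\<gamma> + 1)" by simp
      also have "\<dots> \<le> norm (c * e powr (\<gamma> + 1) / (\<gamma> + 1)) * 1"
        unfolding mult_1_right real_norm_def by (rule abs_ge_self)
      finally show "norm (integral {0..e} w) \<le> norm (c * e powr (\<gamma> + 1) / (\<gamma> + 1)) * 1" .
    qed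
  qed
  have "((\<lambda>e. integral {0..L} w - integral {0..e} w) \<longlongrightarrow> integral {0..L} w - 0) (at_right 0)"
    by (intro tendsto_diff tendsto_const small)
  then show ?thesis using eq by (simp add: tendsto_cong)
qed


lemma refl_int:
  fixes k :: "real \<Rightarrow> real"
  assumes "(k has_integral i) {0..y}"
  shows "((\<lambda>p. k (y - p)) has_integral i) {0..y}"
proof -
  have "((\<lambda>x. k ((-1) *\<^sub>R x + y)) has_integral (1 / \<bar>-1\<bar> ^ DIM(real)) *\<^sub>R i)
          ((\<lambda>x. (1 / (-1)) *\<^sub>R x + - ((1 / (-1)) *\<^sub>R y)) ` cbox 0 y)"
    using assms by (intro has_integral_affinity) auto
  moreover have "(\<lambda>x. (1 / (-1)) *\<^sub>R x + - ((1 / (-1)) *\<^sub>R y)) ` cbox 0 y = {0..y}"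
  proof -
    have "(\<lambda>x. (1 / (-1)) *\<^sub>R x + - ((1 / (-1)) *\<^sub>R y)) = (\<lambda>x::real. y - x)" by (auto simp: fun_eq_iff)
    moreover have "(\<lambda>x::real. y - x) ` {0..y} = {0..y}"
    proof
      show "(\<lambda>x. y - x) ` {0..y} \<subseteq> {0..y}" by auto
      show "{0..y} \<subseteq> (\<lambda>x. y - x) ` {0..y}"
      proof
        fix z assume "z \<in> {0..y}"
        then have "y - z \<in> {0..y}" "z = y - (y - z)" by auto
        then show "z \<in> (\<lambda>x. y - x) ` {0..y}" by blast
      qed
    qed
    ultimately show ?thesis by simp
  qed
  ultimately show ?thesis by (simp add: algebra_simps)
qed

context
  fixes f \<phi> :: "real \<Rightarrow> real" and L B \<alpha> :: real
  assumes L: "0 < L" and \<alpha>: "0 < \<alpha>" "\<alpha> < 1"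
    and fc: "continuous_on {0..L} f"
    and d: "\<And>t. t \<in> {0<..<L} \<Longrightarrow> (f has_real_derivative \<phi> t) (at t)"
    and B: "\<And>t. t \<in> {0<..<L} \<Longrightarrow> \<bar>\<phi> t\<bar> \<le> B" "0 \<le> B"
begin

lemma gtl: "x \<le> L \<Longrightarrow> y \<le> L \<Longrightarrow> \<bar>gt f x - gt f y\<bar> \<le> B * \<bar>x - y\<bar>"
  using gt_lip[OF fc _ d B] L by auto

lemma gt_bound: "x \<le> L \<Longrightarrow> \<bar>gt f x\<bar> \<le> B * \<bar>x\<bar>"
  using gtl[of x 0] L by (simp add: gt_neg)

lemma gt_cont': "continuous_on {..L} (gt f)"
  using gt_cont[OF fc] L by simp

lemma kint:
  assumes y: "y \<le> L"
  shows "(\<lambda>s. s powr (-\<alpha>) * gt f (y - s)) integrable_on {0..L}"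
proof (rule integrable_0L)
  show "(\<lambda>s. B * (\<bar>y\<bar> + L) * s powr (-\<alpha>)) integrable_on {0..L}"
    using \<alpha> L by (intro powr_int) auto
  have "continuous_on {0<..L} (\<lambda>s. gt f (y - s))"
    by (rule continuous_on_compose2[OF gt_cont']) (use y in \<open>auto intro!: continuous_intros\<close>)
  then show "continuous_on {0<..L} (\<lambda>s. s powr (-\<alpha>) * gt f (y - s))"
    by (intro continuous_intros) auto
  fix s assume s: "s \<in> {0<..L}"
  have "\<bar>gt f (y - s)\<bar> \<le> B * \<bar>y - s\<bar>" using gt_bound[of "y - s"] s y by auto
  also have "\<dots> \<le> B * (\<bar>y\<bar> + L)" using s B(2) by (intro mult_left_mono) auto
  finally have "s powr (-\<alpha>) * \<bar>gt f (y - s)\<bar> \<le> s powr (-\<alpha>) * (B * (\<bar>y\<bar> + L))"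
    by (intro mult_left_mono) auto
  then show "\<bar>s powr (-\<alpha>) * gt f (y - s)\<bar> \<le> B * (\<bar>y\<bar> + L) * s powr (-\<alpha>)"
    by (simp add: abs_mult mult.commute)
qed

lemma caputo_int:
  assumes y: "y \<in> {0..L}"
  shows "integral {0..y} (\<lambda>p. (y - p) powr (-\<alpha>) * (f p - f 0)) =
         integral {0..L} (\<lambda>s. s powr (-\<alpha>) * gt f (y - s))"
proof -
  define k where "k = (\<lambda>s. s powr (-\<alpha>) * gt f (y - s))"
  have kL: "k integrable_on {0..L}" unfolding k_def using kint y by auto
  have ky: "k integrable_on {0..y}" using kL y by (intro integrable_on_subinterval[OF kL]) auto
  have "((\<lambda>p. k (y - p)) has_integral integral {0..y} k) {0..y}"
    using ky by (intro refl_int) (simp add: has_integral_integral)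
  then have 1: "integral {0..y} (\<lambda>p. k (y - p)) = integral {0..y} k" by (simp add: integral_unique)
  have 2: "integral {0..y} (\<lambda>p. (y - p) powr (-\<alpha>) * (f p - f 0)) = integral {0..y} (\<lambda>p. k (y - p))"
    by (intro integral_cong) (auto simp: k_def gt_pos)
  have ky2: "k integrable_on {y..L}" using kL y by (intro integrable_on_subinterval[OF kL]) auto
  have "integral {0..y} k + integral {y..L} k = integral {0..L} k"
    using kL y by (intro Henstock_Kurzweil_Integration.integral_combine) auto
  moreover have "integral {y..L} k = integral {y..L} (\<lambda>s. 0)"
    by (intro integral_cong) (auto simp: k_def gt_neg)
  ultimately have 3: "integral {0..y} k = integral {0..L} k" by simp
  show ?thesis using 1 2 3 by (simp add: k_def)
qed

lemma gtd_shift: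
  assumes "t < L" "t \<noteq> 0"
  shows "((\<lambda>z. gt f (z - s)) has_real_derivative ph \<phi> t) (at (t + s))"
proof -
  have g: "(gt f has_real_derivative ph \<phi> t) (at t)" by (rule gt_deriv[OF d assms])
  have "((\<lambda>z. z - s) has_real_derivative 1) (at (t + s))" by (intro derivative_eq_intros) auto
  from DERIV_chain2[of "gt f", OF _ this] g show ?thesis by simp
qed

lemma gtd_refl:
  assumes "y - t < L" "y - t \<noteq> 0"
  shows "((\<lambda>s. gt f (y - s)) has_real_derivative - ph \<phi> (y - t)) (at t)"
proof -
  have g: "(gt f has_real_derivative ph \<phi> (y - t)) (at (y - t))" by (rule gt_deriv[OF d assms])
  have "((\<lambda>s. y - s) has_real_derivative -1) (at t)" by (intro derivative_eq_intros) auto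
  from DERIV_chain2[of "gt f", OF _ this] g show ?thesis by simp
qed

lemma deriv1:
  assumes y: "y \<in> {0<..<L}"
  shows "((\<lambda>z. integral {0..L} (\<lambda>s. s powr (-\<alpha>) * gt f (z - s))) has_real_derivative
           integral {0..L} (\<lambda>s. s powr (-\<alpha>) * ph \<phi> (y - s))) (at y)"
    and "(\<lambda>s. s powr (-\<alpha>) * ph \<phi> (y - s)) integrable_on {0..L}"
proof -
  have r: "L - y > 0" using y by simp
  have int: "(\<lambda>s. s powr (-\<alpha>) * gt f (z - s)) integrable_on {0..L}" if "\<bar>z - y\<bar> < L - y" for z
    using that by (intro kint) auto
  have H: "(\<lambda>s. B * s powr (-\<alpha>)) integrable_on {0..L}" using \<alpha> L by (intro powr_int) auto
  have bd: "\<bar>(s powr (-\<alpha>) * gt f (y + h - s) - s powr (-\<alpha>) * gt f (y - s)) / h\<bar> \<le> B * s powr (-\<alpha>)"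
    if h: "0 < \<bar>h\<bar>" "\<bar>h\<bar> < L - y" and s: "s \<in> {0..L}" for h s
  proof -
    have "\<bar>gt f (y + h - s) - gt f (y - s)\<bar> \<le> B * \<bar>(y + h - s) - (y - s)\<bar>"
      using h s y by (intro gtl) auto
    then have 1: "\<bar>gt f (y + h - s) - gt f (y - s)\<bar> / \<bar>h\<bar> \<le> B" using h by (simp add: divide_le_eq)
    have "(s powr (-\<alpha>) * gt f (y + h - s) - s powr (-\<alpha>) * gt f (y - s)) / h =
          s powr (-\<alpha>) * ((gt f (y + h - s) - gt f (y - s)) / h)" by (simp add: algebra_simps diff_divide_distrib)
    then have e1: "\<bar>(s powr (-\<alpha>) * gt f (y + h - s) - s powr (-\<alpha>) * gt f (y - s)) / h\<bar> =
          \<bar>s powr (-\<alpha>)\<bar> * (\<bar>gt f (y + h - s) - gt f (y - s)\<bar> / \<bar>h\<bar>)" by (simp only: abs_mult abs_divide)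
    have e2: "\<bar>s powr (-\<alpha>)\<bar> = s powr (-\<alpha>)" by simp
    have "\<bar>(s powr (-\<alpha>) * gt f (y + h - s) - s powr (-\<alpha>) * gt f (y - s)) / h\<bar> \<le> s powr (-\<alpha>) * B"
      unfolding e1 e2 using 1 by (intro mult_left_mono) auto
    then show ?thesis by (simp add: mult.commute)
  qed
  have der: "((\<lambda>z. s powr (-\<alpha>) * gt f (z - s)) has_real_derivative s powr (-\<alpha>) * ph \<phi> (y - s)) (at y)"
    if s: "s \<in> {0..L} - {0, y}" for s
  proof -
    have "((\<lambda>z. gt f (z - s)) has_real_derivative ph \<phi> (y - s)) (at ((y - s) + s))"
      using s y by (intro gtd_shift) auto
    then show ?thesis by (intro DERIV_cmult) simp
  qed
  note D = DDC[where r = "L - y" and yc = y and a = 0 and b = L and P = "\<lambda>z s. s powr (-\<alpha>) * gt f (z - s)"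
      and H = "\<lambda>s. B * s powr (-\<alpha>)" and E = "{0, y}"
      and Q = "\<lambda>s. s powr (-\<alpha>) * ph \<phi> (y - s)", OF r int H _ _ der]
  show "((\<lambda>z. integral {0..L} (\<lambda>s. s powr (-\<alpha>) * gt f (z - s))) has_real_derivative
           integral {0..L} (\<lambda>s. s powr (-\<alpha>) * ph \<phi> (y - s))) (at y)"
    using D(1) bd by (simp add: add.commute add_diff_eq)
  show "(\<lambda>s. s powr (-\<alpha>) * ph \<phi> (y - s)) integrable_on {0..L}"
    using D(2) bd by (simp add: add.commute add_diff_eq)
qed

lemma ph_bound: "t \<le> L \<Longrightarrow> t \<noteq> L \<Longrightarrow> \<bar>ph \<phi> t\<bar> \<le> B"
  using B by (auto simp: ph_def)

lemma ibp1:
  assumes y: "y \<in> {0<..<L}"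
  shows "integral {0..L} (\<lambda>s. s powr (-\<alpha>) * ph \<phi> (y - s)) =
         L powr (-\<alpha>) * gt f y + \<alpha> * integral {0..L} (\<lambda>s. s powr (-\<alpha>-1) * (gt f y - gt f (y - s)))"
proof -
  define W1 where "W1 = (\<lambda>s. s powr (-\<alpha>) * ph \<phi> (y - s))"
  define v where "v = (\<lambda>s. gt f y - gt f (y - s))"
  define W2 where "W2 = (\<lambda>s. s powr (-\<alpha>-1) * v s)"
  have W1i: "W1 integrable_on {0..L}" using deriv1(2)[OF y] by (simp add: W1_def)
  have vb: "\<bar>v s\<bar> \<le> B * s" if "0 \<le> s" for s
    using gtl[of y "y - s"] y that by (auto simp: v_def)
  have vc: "continuous_on {0..L} v"
  proof -
    have "continuous_on {0..L} (\<lambda>s. gt f (y - s))"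
      by (rule continuous_on_compose2[OF gt_cont']) (use y in \<open>auto intro!: continuous_intros\<close>)
    then show ?thesis unfolding v_def by (intro continuous_intros)
  qed
  have pw: "s powr (-\<alpha>-1) * s = s powr (-\<alpha>)" if "0 < s" for s
    using powr_mult_base[of s "-\<alpha>-1"] that by (simp add: mult.commute)
  have W2b: "\<bar>W2 s\<bar> \<le> B * s powr (-\<alpha>)" if s: "s \<in> {0..L}" for s
  proof (cases "s = 0")
    case True then show ?thesis by (simp add: W2_def)
  next
    case False
    then have sp: "s > 0" using s by auto
    have "\<bar>W2 s\<bar> = s powr (-\<alpha>-1) * \<bar>v s\<bar>" by (simp add: W2_def abs_mult)
    also have "\<dots> \<le> s powr (-\<alpha>-1) * (B * s)" using vb[of s] sp by (intro mult_left_mono) auto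
    also have "\<dots> = B * (s powr (-\<alpha>-1) * s)" by simp
    also have "\<dots> = B * s powr (-\<alpha>)" using pw[OF sp] by simp
    finally show ?thesis .
  qed
  have W1b: "\<bar>W1 s\<bar> \<le> B * s powr (-\<alpha>)" if s: "s \<in> {0..L}" for s
  proof -
    have "\<bar>ph \<phi> (y - s)\<bar> \<le> B" using s y by (intro ph_bound) auto
    then have "s powr (-\<alpha>) * \<bar>ph \<phi> (y - s)\<bar> \<le> s powr (-\<alpha>) * B" by (intro mult_left_mono) auto
    then show ?thesis by (simp add: W1_def abs_mult mult.commute)
  qed
  have W2i: "W2 integrable_on {0..L}"
  proof (rule integrable_0L)
    show "(\<lambda>s. B * s powr (-\<alpha>)) integrable_on {0..L}" using \<alpha> L by (intro powr_int) auto
    have "continuous_on {0<..L} v" by (rule continuous_on_subset[OF vc]) auto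
    then show "continuous_on {0<..L} W2" unfolding W2_def
      by (intro continuous_intros) auto
    show "\<bar>W2 s\<bar> \<le> B * s powr (-\<alpha>)" if "s \<in> {0<..L}" for s using W2b that by auto
  qed
  have key: "integral {e..L} W1 = L powr (-\<alpha>) * gt f y - v e * e powr (-\<alpha>) + \<alpha> * integral {e..L} W2"
    if e: "0 < e" "e < L" for e
  proof -
    define u where "u = (\<lambda>s::real. s powr (-\<alpha>))"
    define u' where "u' = (\<lambda>s::real. (-\<alpha>) * s powr (-\<alpha> - 1))"
    define v' where "v' = (\<lambda>s. ph \<phi> (y - s))"
    have cv: "continuous_on {e..L} v" using continuous_on_subset[OF vc] e by auto
    have cu: "continuous_on {e..L} u" unfolding u_def using e by (intro continuous_intros) auto
    have cu': "continuous_on {e..L} u'" unfolding u'_def using e by (intro continuous_intros) auto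
    have dv: "(v has_vector_derivative v' t) (at t)" if t: "t \<in> {e<..<L} - {y}" for t
    proof -
      have "((\<lambda>s. gt f (y - s)) has_real_derivative - ph \<phi> (y - t)) (at t)"
        using t e y by (intro gtd_refl) auto
      then have "(v has_real_derivative 0 - (- ph \<phi> (y - t))) (at t)"
        unfolding v_def by (intro DERIV_diff DERIV_const)
      then show ?thesis by (simp add: v'_def has_real_derivative_iff_has_vector_derivative[symmetric])
    qed
    have du: "(u has_vector_derivative u' t) (at t)" if t: "t \<in> {e<..<L} - {y}" for t
    proof -
      have "t > 0" using t e by auto
      then have "(u has_real_derivative (-\<alpha>) * t powr (-\<alpha> - 1)) (at t)"
        unfolding u_def by (rule has_real_derivative_powr)
      then show ?thesis by (simp add: u'_def has_real_derivative_iff_has_vector_derivative[symmetric])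
    qed
    have ci: "(\<lambda>x. v x * u' x) integrable_on {e..L}"
      by (intro integrable_continuous_interval continuous_intros cv cu')
    define Y where "Y = v L * u L - v e * u e - integral {e..L} (\<lambda>x. v x * u' x)"
    have "((\<lambda>x. v x * u' x) has_integral (v L * u L - v e * u e - Y)) {e..L}"
      using ci by (simp add: Y_def has_integral_integral)
    then have "((\<lambda>x. v' x * u x) has_integral Y) {e..L}"
      using integration_by_parts_interior_strong[OF bounded_bilinear_mult, of "{y}" e L v u v' u'] cv cu dv du e
      by auto
    then have 1: "integral {e..L} W1 = Y"
      by (simp add: integral_unique W1_def v'_def u_def mult.commute)
    have vL: "v L = gt f y" using y by (simp add: v_def gt_neg)
    have 2: "integral {e..L} (\<lambda>x. v x * u' x) = - \<alpha> * integral {e..L} W2"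
    proof -
      have "integral {e..L} (\<lambda>x. v x * u' x) = integral {e..L} (\<lambda>x. (- \<alpha>) * W2 x)"
        by (intro integral_cong) (simp add: u'_def W2_def)
      also have "\<dots> = - \<alpha> * integral {e..L} W2" by (simp add: integral_mult_right)
      finally show ?thesis .
    qed
    show ?thesis using 1 2 vL by (simp add: Y_def u_def)
  qed
  have ev: "\<forall>\<^sub>F e in at_right 0. 0 < e \<and> e < L"
    using L eventually_at_right_less[of 0] by (auto simp: eventually_at_right)
  have l1: "((\<lambda>e. integral {e..L} W1) \<longlongrightarrow> integral {0..L} W1) (at_right 0)"
    using \<alpha> L B(2) by (intro LIM0[OF W1i L, of "-\<alpha>" B] W1b) auto
  have l2: "((\<lambda>e. integral {e..L} W2) \<longlongrightarrow> integral {0..L} W2) (at_right 0)"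
    using \<alpha> L B(2) by (intro LIM0[OF W2i L, of "-\<alpha>" B] W2b) auto
  have l3: "((\<lambda>e. v e * e powr (-\<alpha>)) \<longlongrightarrow> 0) (at_right 0)"
  proof (rule tendsto_0_le[of "\<lambda>e. e powr (1 - \<alpha>)" _ _ B])
    show "((\<lambda>e. e powr (1 - \<alpha>)) \<longlongrightarrow> 0) (at_right 0)"
    proof (rule tendsto_zero_powrI)
      show "((\<lambda>e. e) \<longlongrightarrow> 0) (at_right 0)" by (rule tendsto_ident_at)
      show "((\<lambda>e. 1 - \<alpha>) \<longlongrightarrow> 1 - \<alpha>) (at_right 0)" by (rule tendsto_const)
      show "\<forall>\<^sub>F e in at_right (0::real). 0 \<le> e"
        using eventually_at_right_less[of "0::real"] by (rule eventually_mono) simp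
      show "0 < 1 - \<alpha>" using \<alpha> by simp
    qed
    show "\<forall>\<^sub>F e in at_right 0. norm (v e * e powr (-\<alpha>)) \<le> norm (e powr (1 - \<alpha>)) * B"
      using ev
    proof (rule eventually_mono)
      fix e assume e: "0 < e \<and> e < L"
      have "norm (v e * e powr (-\<alpha>)) = \<bar>v e\<bar> * e powr (-\<alpha>)" by (simp add: abs_mult)
      also have "\<dots> \<le> (B * e) * e powr (-\<alpha>)" using vb[of e] e by (intro mult_right_mono) auto
      also have "\<dots> = B * (e * e powr (-\<alpha>))" by simp
      also have "e * e powr (-\<alpha>) = e powr (1 - \<alpha>)" using powr_mult_base[of e "-\<alpha>"] e by simp
      also have "B * e powr (1 - \<alpha>) = norm (e powr (1 - \<alpha>)) * B" by simp
      finally show "norm (v e * e powr (-\<alpha>)) \<le> norm (e powr (1 - \<alpha>)) * B" .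
    qed
  qed
  have "((\<lambda>e. L powr (-\<alpha>) * gt f y - v e * e powr (-\<alpha>) + \<alpha> * integral {e..L} W2) \<longlongrightarrow>
         L powr (-\<alpha>) * gt f y - 0 + \<alpha> * integral {0..L} W2) (at_right 0)"
    by (intro tendsto_add tendsto_diff tendsto_mult tendsto_const l2 l3)
  moreover have "\<forall>\<^sub>F e in at_right 0. integral {e..L} W1 = L powr (-\<alpha>) * gt f y - v e * e powr (-\<alpha>) + \<alpha> * integral {e..L} W2"
    using ev by (rule eventually_mono) (use key in auto)
  ultimately have "((\<lambda>e. integral {e..L} W1) \<longlongrightarrow> L powr (-\<alpha>) * gt f y - 0 + \<alpha> * integral {0..L} W2) (at_right 0)"
    by (rule Lim_transform_eventually[OF _ eventually_mono]) auto
  then have "integral {0..L} W1 = L powr (-\<alpha>) * gt f y + \<alpha> * integral {0..L} W2"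
    using tendsto_unique[OF trivial_limit_at_right_real l1] by simp
  then show ?thesis by (simp add: W1_def W2_def v_def)
qed

lemma P_int:
  assumes y: "y \<le> L"
  shows "(\<lambda>s. s powr (-\<alpha>-1) * (gt f y - gt f (y - s))) integrable_on {0..L}"
proof (rule integrable_0L)
  show "(\<lambda>s. B * s powr (-\<alpha>)) integrable_on {0..L}" using \<alpha> L by (intro powr_int) auto
  have "continuous_on {0<..L} (\<lambda>s. gt f (y - s))"
    by (rule continuous_on_compose2[OF gt_cont']) (use y in \<open>auto intro!: continuous_intros\<close>)
  then show "continuous_on {0<..L} (\<lambda>s. s powr (-\<alpha>-1) * (gt f y - gt f (y - s)))"
    by (intro continuous_intros) auto
  fix s assume s: "s \<in> {0<..L}"
  have "\<bar>gt f y - gt f (y - s)\<bar> \<le> B * s" using gtl[of y "y - s"] y s by auto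
  then have "s powr (-\<alpha>-1) * \<bar>gt f y - gt f (y - s)\<bar> \<le> s powr (-\<alpha>-1) * (B * s)"
    by (intro mult_left_mono) auto
  also have "\<dots> = B * (s powr (-\<alpha>-1) * s)" by simp
  also have "s powr (-\<alpha>-1) * s = s powr (-\<alpha>)"
    using powr_mult_base[of s "-\<alpha>-1"] s by (simp add: mult.commute)
  finally show "\<bar>s powr (-\<alpha>-1) * (gt f y - gt f (y - s))\<bar> \<le> B * s powr (-\<alpha>)"
    by (simp add: abs_mult)
qed

lemma deriv2:
  assumes x0: "x0 \<in> {0<..<L}" and r0: "0 < r0" "0 < x0 - r0" "x0 + r0 < L"
    and \<beta>: "\<alpha> < \<beta>" and C: "0 \<le> C"
    and UH: "\<And>a s. a \<in> {x0 - r0..x0 + r0} \<Longrightarrow> s \<in> {0<..L} \<Longrightarrow> \<bar>ph \<phi> a - ph \<phi> (a - s)\<bar> \<le> C * s powr \<beta>"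
  shows "((\<lambda>y. L powr (-\<alpha>) * gt f y + \<alpha> * integral {0..L} (\<lambda>s. s powr (-\<alpha>-1) * (gt f y - gt f (y - s))))
           has_real_derivative
          L powr (-\<alpha>) * ph \<phi> x0 + \<alpha> * integral {0..L} (\<lambda>s. s powr (-\<alpha>-1) * (ph \<phi> x0 - ph \<phi> (x0 - s)))) (at x0)"
    and "(\<lambda>s. s powr (-\<alpha>-1) * (ph \<phi> x0 - ph \<phi> (x0 - s))) integrable_on {0..L}"
proof -
  define P where "P = (\<lambda>y s. s powr (-\<alpha>-1) * (gt f y - gt f (y - s)))"
  define Q where "Q = (\<lambda>s. s powr (-\<alpha>-1) * (ph \<phi> x0 - ph \<phi> (x0 - s)))"
  have int: "P y integrable_on {0..L}" if "\<bar>y - x0\<bar> < r0" for y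
    unfolding P_def using that r0 by (intro P_int) auto
  have H: "(\<lambda>s. C * s powr (\<beta> - \<alpha> - 1)) integrable_on {0..L}" using \<beta> L by (intro powr_int) auto
  have wb: "\<bar>(gt f (x0 + h) - gt f (x0 + h - s)) - (gt f x0 - gt f (x0 - s))\<bar> \<le> C * s powr \<beta> * \<bar>h\<bar>"
    if h: "\<bar>h\<bar> < r0" and s: "s \<in> {0<..L}" for h s
  proof -
    define w where "w = (\<lambda>t. gt f (x0 + t) - gt f (x0 + t - s))"
    have K: "0 \<le> C * s powr \<beta>" using C by simp
    have lw: "\<bar>w b - w a\<bar> \<le> C * s powr \<beta> * (b - a)" if ab: "a \<le> b" "-r0 < a" "b < r0" for a b
    proof (rule lip_fin[OF ab(1) _ K, of "{s - x0}"])
      show "finite {s - x0}" by simp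
      have "continuous_on {a..b} (\<lambda>t. gt f (x0 + t))"
        by (rule continuous_on_compose2[OF gt_cont']) (use ab r0 in \<open>auto intro!: continuous_intros\<close>)
      moreover have "continuous_on {a..b} (\<lambda>t. gt f (x0 + t - s))"
        by (rule continuous_on_compose2[OF gt_cont']) (use ab r0 s in \<open>auto intro!: continuous_intros\<close>)
      ultimately show "continuous_on {a..b} w" unfolding w_def by (intro continuous_intros)
      show "(w has_real_derivative ph \<phi> (x0 + t) - ph \<phi> (x0 + t - s)) (at t)"
        if t: "t \<in> {a<..<b} - {s - x0}" for t
      proof -
        have 1: "((\<lambda>z. gt f (z - (-x0))) has_real_derivative ph \<phi> (x0 + t)) (at t)"
          using gtd_shift[of "x0 + t" "-x0"] t ab r0 by simp
        have 2: "((\<lambda>z. gt f (z - (s - x0))) has_real_derivative ph \<phi> (x0 + t - s)) (at t)"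
          using gtd_shift[of "x0 + t - s" "s - x0"] t ab r0 s by simp
        have "((\<lambda>z. gt f (z - (-x0)) - gt f (z - (s - x0))) has_real_derivative ph \<phi> (x0 + t) - ph \<phi> (x0 + t - s)) (at t)"
          by (rule DERIV_diff[OF 1 2])
        then show ?thesis unfolding w_def by (simp add: algebra_simps)
      qed
      show "\<bar>ph \<phi> (x0 + t) - ph \<phi> (x0 + t - s)\<bar> \<le> C * s powr \<beta>" if t: "t \<in> {a<..<b} - {s - x0}" for t
        using UH[of "x0 + t" s] t ab s by auto
    qed
    show ?thesis
    proof (cases "0 \<le> h")
      case True
      then show ?thesis using lw[of 0 h] h r0 by (simp add: w_def abs_minus_commute)
    next
      case False
      then show ?thesis using lw[of h 0] h r0 by (simp add: w_def abs_minus_commute)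
    qed
  qed
  have bd: "\<bar>(P (x0 + h) s - P x0 s) / h\<bar> \<le> C * s powr (\<beta> - \<alpha> - 1)"
    if h: "0 < \<bar>h\<bar>" "\<bar>h\<bar> < r0" and s: "s \<in> {0..L}" for h s
  proof (cases "s = 0")
    case True then show ?thesis by (simp add: P_def)
  next
    case False
    then have sp: "s \<in> {0<..L}" using s by auto
    have e1: "(P (x0 + h) s - P x0 s) / h =
      s powr (-\<alpha>-1) * (((gt f (x0 + h) - gt f (x0 + h - s)) - (gt f x0 - gt f (x0 - s))) / h)"
      by (simp add: P_def algebra_simps diff_divide_distrib)
    have "\<bar>((gt f (x0 + h) - gt f (x0 + h - s)) - (gt f x0 - gt f (x0 - s))) / h\<bar> \<le> C * s powr \<beta>"
      using wb[OF h(2) sp] h(1) by (simp add: abs_divide divide_le_eq)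
    then have "\<bar>(P (x0 + h) s - P x0 s) / h\<bar> \<le> s powr (-\<alpha>-1) * (C * s powr \<beta>)"
      unfolding e1 abs_mult abs_of_nonneg[OF powr_ge_zero] by (intro mult_left_mono) auto
    also have "\<dots> = C * (s powr (-\<alpha>-1) * s powr \<beta>)" by simp
    also have "s powr (-\<alpha>-1) * s powr \<beta> = s powr (\<beta> - \<alpha> - 1)"
      by (simp add: powr_add[symmetric] algebra_simps)
    finally show ?thesis .
  qed
  have der: "((\<lambda>y. P y s) has_real_derivative Q s) (at x0)" if s: "s \<in> {0..L} - {0, x0}" for s
  proof -
    have 1: "(gt f has_real_derivative ph \<phi> x0) (at x0)" using x0 by (intro gt_deriv[OF d]) auto
    have 2: "((\<lambda>z. gt f (z - s)) has_real_derivative ph \<phi> (x0 - s)) (at x0)"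
      using gtd_shift[of "x0 - s" s] s x0 by simp
    have "((\<lambda>y. gt f y - gt f (y - s)) has_real_derivative ph \<phi> x0 - ph \<phi> (x0 - s)) (at x0)"
      by (rule DERIV_diff[OF 1 2])
    then show ?thesis unfolding P_def Q_def by (rule DERIV_cmult)
  qed
  note D = DDC[where r = r0 and yc = x0 and a = 0 and b = L and P = P
      and H = "\<lambda>s. C * s powr (\<beta> - \<alpha> - 1)" and E = "{0, x0}" and Q = Q, OF r0(1) int H bd _ der]
  show "Q integrable_on {0..L}" using D(2) by simp
  have "((\<lambda>y. L powr (-\<alpha>) * gt f y + \<alpha> * integral {0..L} (P y)) has_real_derivative
           L powr (-\<alpha>) * ph \<phi> x0 + \<alpha> * integral {0..L} Q) (at x0)"
    using x0 by (intro DERIV_add DERIV_cmult D(1) gt_deriv[OF d]) auto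
  then show "((\<lambda>y. L powr (-\<alpha>) * gt f y + \<alpha> * integral {0..L} (\<lambda>s. s powr (-\<alpha>-1) * (gt f y - gt f (y - s))))
           has_real_derivative
          L powr (-\<alpha>) * ph \<phi> x0 + \<alpha> * integral {0..L} (\<lambda>s. s powr (-\<alpha>-1) * (ph \<phi> x0 - ph \<phi> (x0 - s)))) (at x0)"
    by (simp add: P_def Q_def)
qed

lemma sign:
  assumes x0: "x0 \<in> {0<..<L}" and r0: "0 < r0" "0 < x0 - r0" "x0 + r0 < L"
    and \<beta>: "\<alpha> < \<beta>" and C: "0 \<le> C"
    and UH: "\<And>a s. a \<in> {x0 - r0..x0 + r0} \<Longrightarrow> s \<in> {0<..L} \<Longrightarrow> \<bar>ph \<phi> a - ph \<phi> (a - s)\<bar> \<le> C * s powr \<beta>"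
    and phx0: "\<phi> x0 = 0"
    and gm: "\<And>t. t \<in> {0..x0} \<Longrightarrow> f t \<le> f x0"
  shows "integral {0..L} (\<lambda>s. s powr (-\<alpha>-1) * (ph \<phi> x0 - ph \<phi> (x0 - s))) \<le> 0"
proof -
  define Q where "Q = (\<lambda>s. s powr (-\<alpha>-1) * (ph \<phi> x0 - ph \<phi> (x0 - s)))"
  have Qi: "Q integrable_on {0..L}" unfolding Q_def by (rule deriv2(2)[OF x0 r0 \<beta> C UH]) auto
  have ph0: "ph \<phi> x0 = 0" using x0 phx0 by (simp add: ph_def)
  have x0r: "x0 \<in> {x0 - r0..x0 + r0}" using r0 by auto
  have Qb: "\<bar>Q s\<bar> \<le> C * s powr (\<beta> - \<alpha> - 1)" if s: "s \<in> {0..L}" for s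
  proof (cases "s = 0")
    case True then show ?thesis by (simp add: Q_def)
  next
    case False
    then have sp: "s \<in> {0<..L}" using s by auto
    have "\<bar>Q s\<bar> = s powr (-\<alpha>-1) * \<bar>ph \<phi> x0 - ph \<phi> (x0 - s)\<bar>" by (simp add: Q_def abs_mult)
    also have "\<dots> \<le> s powr (-\<alpha>-1) * (C * s powr \<beta>)" using UH[OF x0r sp] by (intro mult_left_mono) auto
    also have "\<dots> = C * (s powr (-\<alpha>-1) * s powr \<beta>)" by simp
    also have "s powr (-\<alpha>-1) * s powr \<beta> = s powr (\<beta> - \<alpha> - 1)"
      by (simp add: powr_add[symmetric] algebra_simps)
    finally show ?thesis .
  qed
  have key: "integral {e..L} Q \<le> C * e powr (\<beta> - \<alpha>)" if e: "0 < e" "e < r0" for e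
  proof -
    have eL: "e < L" "e < x0" using e r0 by auto
    define u where "u = (\<lambda>s::real. s powr (-\<alpha>-1))"
    define u' where "u' = (\<lambda>s::real. (-\<alpha>-1) * s powr (-\<alpha>-1-1))"
    define v where "v = (\<lambda>s. gt f (x0 - s) + f 0 - f x0)"
    define v' where "v' = (\<lambda>s. - ph \<phi> (x0 - s))"
    have vc0: "continuous_on {0..L} v"
    proof -
      have "continuous_on {0..L} (\<lambda>s. gt f (x0 - s))"
        by (rule continuous_on_compose2[OF gt_cont']) (use x0 in \<open>auto intro!: continuous_intros\<close>)
      then show ?thesis unfolding v_def by (intro continuous_intros)
    qed
    have cv: "continuous_on {e..L} v" by (rule continuous_on_subset[OF vc0]) (use e in auto)
    have cu: "continuous_on {e..L} u" unfolding u_def using e by (intro continuous_intros) auto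
    have cu': "continuous_on {e..L} u'" unfolding u'_def using e by (intro continuous_intros) auto
    have dv: "(v has_vector_derivative v' t) (at t)" if t: "t \<in> {e<..<L} - {x0}" for t
    proof -
      have "((\<lambda>s. gt f (x0 - s)) has_real_derivative - ph \<phi> (x0 - t)) (at t)"
        using t e x0 by (intro gtd_refl) auto
      then have "(v has_real_derivative - ph \<phi> (x0 - t) + 0 - 0) (at t)"
        unfolding v_def by (intro DERIV_diff DERIV_add DERIV_const)
      then show ?thesis by (simp add: v'_def has_real_derivative_iff_has_vector_derivative[symmetric])
    qed
    have du: "(u has_vector_derivative u' t) (at t)" if t: "t \<in> {e<..<L} - {x0}" for t
    proof -
      have "t > 0" using t e by auto
      then have "(u has_real_derivative (-\<alpha>-1) * t powr (-\<alpha>-1-1)) (at t)"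
        unfolding u_def by (rule has_real_derivative_powr)
      then show ?thesis by (simp add: u'_def has_real_derivative_iff_has_vector_derivative[symmetric])
    qed
    have ci: "(\<lambda>x. v x * u' x) integrable_on {e..L}"
      by (intro integrable_continuous_interval continuous_intros cv cu')
    define Y where "Y = v L * u L - v e * u e - integral {e..L} (\<lambda>x. v x * u' x)"
    have "((\<lambda>x. v x * u' x) has_integral (v L * u L - v e * u e - Y)) {e..L}"
      using ci by (simp add: Y_def has_integral_integral)
    then have "((\<lambda>x. v' x * u x) has_integral Y) {e..L}"
      using integration_by_parts_interior_strong[OF bounded_bilinear_mult, of "{x0}" e L v u v' u'] cv cu dv du e eL
      by auto
    then have 0: "integral {e..L} (\<lambda>x. v' x * u x) = Y" by (rule integral_unique)
    have "integral {e..L} Q = integral {e..L} (\<lambda>x. v' x * u x)"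
      by (intro integral_cong) (simp add: Q_def v'_def u_def ph0)
    then have 1: "integral {e..L} Q = Y" using 0 by simp
    have vneg: "v s \<le> 0" if "0 \<le> s" for s
    proof (cases "x0 - s \<le> 0")
      case True then show ?thesis using gm[of 0] x0 by (simp add: v_def gt_neg)
    next
      case False then show ?thesis using gm[of "x0 - s"] that by (simp add: v_def gt_pos)
    qed
    have 2: "v L * u L \<le> 0" using vneg[of L] L by (simp add: u_def mult_nonpos_nonneg)
    have 3: "integral {e..L} (\<lambda>x. v x * u' x) \<ge> 0"
    proof (rule integral_nonneg[OF ci])
      fix x assume x: "x \<in> {e..L}"
      have "v x \<le> 0" using vneg[of x] x e by auto
      moreover have "u' x \<le> 0" using \<alpha> by (simp add: u'_def mult_nonpos_nonneg)
      ultimately show "0 \<le> v x * u' x" by (simp add: mult_nonpos_nonpos)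
    qed
    have 4: "\<bar>v e\<bar> \<le> C * e powr \<beta> * e"
    proof -
      have "\<bar>f x0 - f (x0 - e)\<bar> \<le> C * e powr \<beta> * (x0 - (x0 - e))"
      proof (rule lip_fin[of "x0 - e" x0 "{}"])
        show "x0 - e \<le> x0" "finite {}" "0 \<le> C * e powr \<beta>" using e C by auto
        show "continuous_on {x0 - e..x0} f" by (rule continuous_on_subset[OF fc]) (use eL x0 in auto)
        show "(f has_real_derivative \<phi> t) (at t)" if t: "t \<in> {x0 - e<..<x0} - {}" for t
          using t eL x0 by (intro d) auto
        show "\<bar>\<phi> t\<bar> \<le> C * e powr \<beta>" if t: "t \<in> {x0 - e<..<x0} - {}" for t
        proof -
          have tp: "t > 0" using t eL by auto
          have "\<bar>ph \<phi> x0 - ph \<phi> (x0 - (x0 - t))\<bar> \<le> C * (x0 - t) powr \<beta>"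
            using t eL L x0 by (intro UH[OF x0r]) auto
          then have "\<bar>\<phi> t\<bar> \<le> C * (x0 - t) powr \<beta>" using tp ph0 by (simp add: ph_def)
          also have "\<dots> \<le> C * e powr \<beta>"
            using t C \<beta> \<alpha> by (intro mult_left_mono powr_mono2) auto
          finally show ?thesis .
        qed
      qed
      moreover have "v e = f (x0 - e) - f x0" using eL by (simp add: v_def gt_pos)
      ultimately show ?thesis by (simp add: abs_minus_commute)
    qed
    have 5: "- (v e * u e) \<le> C * e powr (\<beta> - \<alpha>)"
    proof -
      have "- (v e * u e) = (- v e) * u e" by simp
      also have "\<dots> \<le> \<bar>v e\<bar> * u e" by (intro mult_right_mono) (auto simp: u_def)
      also have "\<dots> \<le> (C * e powr \<beta> * e) * u e" using 4 by (intro mult_right_mono) (auto simp: u_def)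
      also have "\<dots> = C * (e powr \<beta> * (e * e powr (-\<alpha>-1)))" by (simp add: u_def)
      also have "e * e powr (-\<alpha>-1) = e powr (-\<alpha>)" using powr_mult_base[of e "-\<alpha>-1"] e by simp
      also have "e powr \<beta> * e powr (-\<alpha>) = e powr (\<beta> - \<alpha>)" by (simp add: powr_add[symmetric])
      finally show ?thesis .
    qed
    show ?thesis using 1 2 3 5 by (simp add: Y_def)
  qed
  have l1: "((\<lambda>e. integral {e..L} Q) \<longlongrightarrow> integral {0..L} Q) (at_right 0)"
    using \<beta> C by (intro LIM0[OF Qi L, of "\<beta> - \<alpha> - 1" C] Qb) auto
  have l2: "((\<lambda>e. C * e powr (\<beta> - \<alpha>)) \<longlongrightarrow> C * 0) (at_right 0)"
  proof (intro tendsto_mult tendsto_const tendsto_zero_powrI)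
    show "((\<lambda>e. e) \<longlongrightarrow> 0) (at_right 0)" by (rule tendsto_ident_at)
    show "((\<lambda>e. \<beta> - \<alpha>) \<longlongrightarrow> \<beta> - \<alpha>) (at_right 0)" by (rule tendsto_const)
    show "\<forall>\<^sub>F e in at_right (0::real). 0 \<le> e"
      using eventually_at_right_less[of "0::real"] by (rule eventually_mono) simp
    show "0 < \<beta> - \<alpha>" using \<beta> by simp
  qed
  have ev: "\<forall>\<^sub>F e in at_right 0. 0 < e \<and> e < r0"
    using r0 eventually_at_right_less[of 0] by (auto simp: eventually_at_right)
  have "\<forall>\<^sub>F e in at_right 0. integral {e..L} Q \<le> C * e powr (\<beta> - \<alpha>)"
    using ev by (rule eventually_mono) (use key in auto)
  from tendsto_le[OF trivial_limit_at_right_real l2 l1 this] show ?thesis by (simp add: Q_def)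
qed

end


theorem lemma7:
  fixes f f' f'' :: "real \<Rightarrow> real" and L \<beta> x0 :: real
  assumes L: "L > 0"
    and \<beta>: "0 < \<beta>" "\<beta> < 1"
    and f_deriv: "\<And>x. x \<in> {0..L} \<Longrightarrow> (f has_real_derivative f' x) (at x within {0..L})"
    and f'_ac: "abs_cont_on f' 0 L"
    and f''_deriv: "AE x in lebesgue_on {0..L}. (f' has_real_derivative f'' x) (at x)"
    and f''_Lq: "\<And>\<kappa>. \<kappa> > 0 \<Longrightarrow> in_Lp (1 / (1 - \<beta>)) f'' \<kappa> L"
    and x0: "x0 \<in> {0<..<L}"
    and locmax: "\<exists>\<delta>>0. \<forall>x\<in>{0..L}. \<bar>x - x0\<bar> < \<delta> \<longrightarrow> f x \<le> f x0"
    and globmax: "\<forall>x\<in>{0..x0}. f x \<le> f x0"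
  shows "\<forall>\<alpha>. 0 < \<alpha> \<and> \<alpha> < \<beta> \<longrightarrow>
           (\<exists>D. (caputo \<alpha> f has_real_derivative D) (at x0) \<and> D \<le> 0)"
proof (intro allI impI)
  fix \<alpha> :: real assume \<alpha>: "0 < \<alpha> \<and> \<alpha> < \<beta>"
  then have \<alpha>1: "0 < \<alpha>" "\<alpha> < 1" "\<alpha> < \<beta>" using \<beta> by auto
  have fpc: "continuous_on {0..L} f'" by (rule ac_cont[OF f'_ac])
  obtain B0 where B0: "\<forall>x\<in>f' ` {0..L}. norm x \<le> B0"
    using compact_imp_bounded[OF compact_continuous_image[OF fpc compact_Icc]] unfolding bounded_iff by blast
  define B where "B = max B0 0"
  have Ball: "\<And>t. t \<in> {0..L} \<Longrightarrow> \<bar>f' t\<bar> \<le> B" using B0 by (force simp: B_def)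
  have Bo: "\<And>t. t \<in> {0<..<L} \<Longrightarrow> \<bar>f' t\<bar> \<le> B" using Ball by auto
  have Bn: "0 \<le> B" by (simp add: B_def)
  have fc: "continuous_on {0..L} f"
    unfolding continuous_on_eq_continuous_within using f_deriv by (blast intro: DERIV_continuous)
  have d: "\<And>t. t \<in> {0<..<L} \<Longrightarrow> (f has_real_derivative f' t) (at t)"
  proof -
    fix t :: real assume t: "t \<in> {0<..<L}"
    then have "t \<in> interior {0..L}" by simp
    then have "at t within {0..L} = at t" by (rule at_within_interior)
    then show "(f has_real_derivative f' t) (at t)" using f_deriv[of t] t by simp
  qed
  have phx0: "f' x0 = 0"
  proof -
    obtain \<delta> where \<delta>: "\<delta> > 0" "\<forall>x\<in>{0..L}. \<bar>x - x0\<bar> < \<delta> \<longrightarrow> f x \<le> f x0" using locmax by blast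
    define \<delta>' where "\<delta>' = min \<delta> (min x0 (L - x0))"
    have "\<delta>' > 0" using \<delta> x0 by (simp add: \<delta>'_def)
    moreover have "\<forall>y. \<bar>x0 - y\<bar> < \<delta>' \<longrightarrow> f y \<le> f x0"
    proof (intro allI impI)
      fix y assume "\<bar>x0 - y\<bar> < \<delta>'"
      then have "y \<in> {0..L}" "\<bar>y - x0\<bar> < \<delta>" by (auto simp: \<delta>'_def)
      then show "f y \<le> f x0" using \<delta>(2) by blast
    qed
    ultimately show ?thesis using DERIV_local_max[OF d[OF x0]] by blast
  qed
  obtain N where N: "negligible N" "\<And>x. x \<in> {0..L} - N \<Longrightarrow> (f' has_real_derivative f'' x) (at x)"
  proof -
    have "AE x in lebesgue. x \<in> {0..L} \<longrightarrow> (f' has_real_derivative f'' x) (at x)"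
      using f''_deriv by (subst (asm) AE_restrict_space_iff) auto
    then obtain N0 where N0: "{x \<in> space lebesgue. \<not> (x \<in> {0..L} \<longrightarrow> (f' has_real_derivative f'' x) (at x))} \<subseteq> N0"
      "emeasure lebesgue N0 = 0" "N0 \<in> sets lebesgue" by (rule AE_E)
    have "negligible N0" using N0(2,3) by (simp add: negligible_iff_null_sets null_sets_def)
    moreover have "\<And>x. x \<in> {0..L} - N0 \<Longrightarrow> (f' has_real_derivative f'' x) (at x)" using N0(1) by auto
    ultimately show ?thesis by (rule that)
  qed
  define \<kappa> where "\<kappa> = x0 / 2"
  have \<kappa>: "0 < \<kappa>" "\<kappa> < x0" using x0 by (auto simp: \<kappa>_def)
  have Lq: "(\<lambda>x. \<bar>f'' x\<bar> powr (1/(1-\<beta>))) integrable_on {\<kappa>..L}"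
    using f''_Lq[OF \<kappa>(1)] unfolding in_Lp_def by (intro set_borel_integral_eq_integral(1)) auto
  obtain C where C: "C \<ge> 0" "\<forall>a\<in>{\<kappa>..L}. \<forall>b\<in>{\<kappa>..L}. \<bar>f' a - f' b\<bar> \<le> C * \<bar>a - b\<bar> powr \<beta>"
  proof -
    have "\<exists>C\<ge>0. \<forall>a\<in>{\<kappa>..L}. \<forall>b\<in>{\<kappa>..L}. \<bar>f' a - f' b\<bar> \<le> C * \<bar>a - b\<bar> powr \<beta>"
    proof (rule holder[OF \<beta> ac_sub[OF f'_ac] N(1) _ Lq])
      show "0 \<le> \<kappa>" "L \<le> L" using \<kappa> by auto
      fix x assume "x \<in> {\<kappa>..L} - N"
      then show "(f' has_real_derivative f'' x) (at x)" using \<kappa> by (intro N(2)) auto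
    qed
    then show ?thesis using that by blast
  qed
  define r0 where "r0 = min (x0/4) ((L - x0)/2)"
  have r0le: "r0 \<le> x0/4" "r0 \<le> (L - x0)/2" unfolding r0_def by (rule min.cobounded1, rule min.cobounded2)
  have "0 < r0" using x0 by (simp add: r0_def)
  then have r0: "0 < r0" "0 < x0 - r0" "x0 + r0 < L" using x0 r0le by auto
  define d0 where "d0 = x0 / 4"
  have d0: "0 < d0" using x0 by (simp add: d0_def)
  define C' where "C' = C + 2 * B / d0 powr \<beta>"
  have C': "0 \<le> C'" using C Bn d0 by (simp add: C'_def)
  have UH: "\<bar>ph f' a - ph f' (a - s)\<bar> \<le> C' * s powr \<beta>"
    if a: "a \<in> {x0 - r0..x0 + r0}" and s: "s \<in> {0<..L}" for a s
  proof -
    have a1: "\<kappa> + d0 \<le> a" "a < L" using a r0 by (auto simp: \<kappa>_def d0_def r0_def)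
    have pa: "ph f' a = f' a" using a1 \<kappa> d0 by (simp add: ph_def)
    show ?thesis
    proof (cases "\<kappa> \<le> a - s")
      case True
      have "ph f' (a - s) = f' (a - s)" using True \<kappa> by (simp add: ph_def)
      moreover have "a \<in> {\<kappa>..L}" "a - s \<in> {\<kappa>..L}" using True a1 d0 s by auto
      ultimately have "\<bar>ph f' a - ph f' (a - s)\<bar> \<le> C * \<bar>a - (a - s)\<bar> powr \<beta>"
        using C(2) pa by (metis)
      also have "\<dots> = C * s powr \<beta>" using s by simp
      also have "\<dots> \<le> C' * s powr \<beta>" using Bn d0 by (intro mult_right_mono) (auto simp: C'_def)
      finally show ?thesis .
    next
      case False
      then have sd: "d0 \<le> s" using a1 by simp
      have "\<bar>ph f' (a - s)\<bar> \<le> B"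
      proof (cases "a - s \<le> 0")
        case True then show ?thesis using Bn by (simp add: ph_def)
      next
        case False then show ?thesis using Ball[of "a - s"] a1 s by (simp add: ph_def)
      qed
      moreover have "\<bar>ph f' a\<bar> \<le> B" using pa Ball[of a] a1 \<kappa> d0 by simp
      ultimately have "\<bar>ph f' a - ph f' (a - s)\<bar> \<le> 2 * B" by simp
      also have "\<dots> = (2 * B / d0 powr \<beta>) * d0 powr \<beta>" using d0 by simp
      also have "\<dots> \<le> (2 * B / d0 powr \<beta>) * s powr \<beta>"
        using sd d0 Bn \<beta> by (intro mult_left_mono powr_mono2) auto
      also have "\<dots> \<le> C' * s powr \<beta>" using C by (intro mult_right_mono) (auto simp: C'_def)
      finally show ?thesis .
    qed
  qed
  note ctx = L \<alpha>1(1) \<alpha>1(2) fc d Bo Bn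
  define M where "M = (\<lambda>y. L powr (-\<alpha>) * gt f y + \<alpha> * integral {0..L} (\<lambda>s. s powr (-\<alpha>-1) * (gt f y - gt f (y - s))))"
  define Q where "Q = (\<lambda>s. s powr (-\<alpha>-1) * (ph f' x0 - ph f' (x0 - s)))"
  define D where "D = L powr (-\<alpha>) * ph f' x0 + \<alpha> * integral {0..L} Q"
  have MD: "(M has_real_derivative D) (at x0)"
    unfolding M_def D_def Q_def by (rule deriv2(1)[OF ctx x0 r0 \<alpha>1(3) C' UH])
  have sg: "integral {0..L} Q \<le> 0"
    unfolding Q_def by (rule sign[OF ctx x0 r0 \<alpha>1(3) C' UH phx0]) (use globmax in auto)
  have ph0: "ph f' x0 = 0" using phx0 by (simp add: ph_def)
  have D0: "D \<le> 0" using sg \<alpha>1 by (simp add: D_def ph0 mult_nonneg_nonpos)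
  have cap: "caputo \<alpha> f y = (1 / Gamma (1 - \<alpha>)) * M y" if y: "y \<in> {0<..<L}" for y
  proof -
    define Fc where "Fc = (\<lambda>y. integral {0..y} (\<lambda>p. (y - p) powr (-\<alpha>) * (f p - f 0)))"
    define \<Phi> where "\<Phi> = (\<lambda>z. integral {0..L} (\<lambda>s. s powr (-\<alpha>) * gt f (z - s)))"
    have "(\<Phi> has_real_derivative integral {0..L} (\<lambda>s. s powr (-\<alpha>) * ph f' (y - s))) (at y)"
      unfolding \<Phi>_def by (rule deriv1(1)[OF ctx y])
    then have "(Fc has_real_derivative integral {0..L} (\<lambda>s. s powr (-\<alpha>) * ph f' (y - s))) (at y)"
    proof (rule has_field_derivative_transform_within_open[of _ _ _ "{0<..<L}"])
      show "open {0<..<L}" by simp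
      show "y \<in> {0<..<L}" by (rule y)
      fix z assume "z \<in> {0<..<L}"
      then show "\<Phi> z = Fc z" unfolding \<Phi>_def Fc_def by (intro caputo_int[OF ctx, symmetric]) auto
    qed
    then have "deriv Fc y = integral {0..L} (\<lambda>s. s powr (-\<alpha>) * ph f' (y - s))" by (rule DERIV_imp_deriv)
    also have "\<dots> = M y" unfolding M_def by (rule ibp1[OF ctx y])
    finally show ?thesis unfolding caputo_def Fc_def by simp
  qed
  have "((\<lambda>y. (1 / Gamma (1 - \<alpha>)) * M y) has_real_derivative (1 / Gamma (1 - \<alpha>)) * D) (at x0)"
    by (rule DERIV_cmult[OF MD])
  then have "(caputo \<alpha> f has_real_derivative (1 / Gamma (1 - \<alpha>)) * D) (at x0)"
  proof (rule has_field_derivative_transform_within_open[of _ _ _ "{0<..<L}"])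
    show "open {0<..<L}" by simp
    show "x0 \<in> {0<..<L}" by (rule x0)
    fix z assume "z \<in> {0<..<L}"
    then show "(1 / Gamma (1 - \<alpha>)) * M z = caputo \<alpha> f z" using cap by simp
  qed
  moreover have "(1 / Gamma (1 - \<alpha>)) * D \<le> 0"
  proof -
    have "Gamma (1 - \<alpha>) > 0" using \<alpha>1 by (intro Gamma_real_pos) simp
    then show ?thesis using D0 by (simp add: divide_nonpos_pos)
  qed
  ultimately show "\<exists>D. (caputo \<alpha> f has_real_derivative D) (at x0) \<and> D \<le> 0" by blast
qed


end
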